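(* Let $X\in\mathbb{R}^{m\times n}$ be fixed, $V=\frac1nXX^\top$, $W^K,W^Q\in\mathbb{R}^{n\times n_k}$ with i.i.d. $\mathcal N(0,1)$ entries, $Y=\frac1nXW^KW^{Q,\top}X^\top$, $\tau>0$, and $A=I+\mathrm{Softmax}(\tau^{-1}Y)-\frac1m\mathbf 1\mathbf 1^\top$ (Softmax row-wise). Then $$\mathbb{E}[A^{\alpha\alpha'}A^{\beta\beta'}A^{\delta\delta'}A^{\omega\omega'}]-\mathbb{E}[A^{\alpha\alpha'}A^{\beta\beta'}]\mathbb{E}[A^{\delta\delta'}A^{\omega\omega'}]=\frac{n_k}{\tau^2m^2}\Big(\delta_{\alpha\alpha'}\delta_{\delta\delta'}S_1^{\beta\beta',\omega\omega'}+\delta_{\alpha\alpha'}\delta_{\omega\omega'}S_1^{\beta\beta',\delta\delta'}+\delta_{\beta\beta'}\delta_{\delta\delta'}S_1^{\alpha\alpha',\omega\omega'}+\delta_{\beta\beta'}\delta_{\omega\omega'}S_1^{\alpha\alpha',\delta\delta'}\Big)+O(n_k\tau^{-3}).$$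
   Context: $\delta_{\alpha\beta}$ is the Kronecker delta. With $V^{\alpha\bar x}=\frac1m\sum_\nu V^{\alpha\nu}$ and $V^{\bar x\bar x}=\frac1{m^2}\sum_{\nu,\kappa}V^{\nu\kappa}$: $S_1^{\alpha\delta,\beta\omega}=V^{\alpha\beta}(V^{\delta\omega}-V^{\delta\bar x}-V^{\omega\bar x}+V^{\bar x\bar x})$. $O(n_k\tau^{-3})$ denotes a remainder bounded by a constant (independent of $\tau$) times $n_k\tau^{-3}$ as $\tau\to\infty$. *)

theory Defs
  imports "HOL-Probability.Probability" "HOL-Library.Landau_Symbols"
begin

definition std_gauss :: "real measure" where
  "std_gauss = density lborel std_normal_density"

text \<open>Law of an n x nk matrix with i.i.d. N(0,1) entries (entries indexed by (i,c),
  i < n, c < nk; values outside the index set are undefined by PiM convention).\<close>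
definition gauss_matrix :: "nat \<Rightarrow> nat \<Rightarrow> (nat \<times> nat \<Rightarrow> real) measure" where
  "gauss_matrix n nk = PiM ({..<n} \<times> {..<nk}) (\<lambda>_. std_gauss)"

definition WKQ_law :: "nat \<Rightarrow> nat \<Rightarrow> ((nat \<times> nat \<Rightarrow> real) \<times> (nat \<times> nat \<Rightarrow> real)) measure" where
  "WKQ_law n nk = gauss_matrix n nk \<Otimes>\<^sub>M gauss_matrix n nk"

definition Ymat :: "nat \<Rightarrow> nat \<Rightarrow> (nat \<Rightarrow> nat \<Rightarrow> real) \<Rightarrow>
    (nat \<times> nat \<Rightarrow> real) \<Rightarrow> (nat \<times> nat \<Rightarrow> real) \<Rightarrow> nat \<Rightarrow> nat \<Rightarrow> real" where
  "Ymat n nk X WK WQ a b =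
     (1 / real n) * (\<Sum>i<n. \<Sum>j<n. \<Sum>c<nk. X a i * WK (i, c) * WQ (j, c) * X b j)"

definition softmax_row :: "nat \<Rightarrow> (nat \<Rightarrow> nat \<Rightarrow> real) \<Rightarrow> nat \<Rightarrow> nat \<Rightarrow> real" where
  "softmax_row m Z a b = exp (Z a b) / (\<Sum>c<m. exp (Z a c))"

definition Amat :: "nat \<Rightarrow> nat \<Rightarrow> nat \<Rightarrow> (nat \<Rightarrow> nat \<Rightarrow> real) \<Rightarrow> real \<Rightarrow>
    (nat \<times> nat \<Rightarrow> real) \<Rightarrow> (nat \<times> nat \<Rightarrow> real) \<Rightarrow> nat \<Rightarrow> nat \<Rightarrow> real" where
  "Amat m n nk X \<tau> WK WQ a b =
     (if a = b then 1 else 0)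
     + softmax_row m (\<lambda>p q. Ymat n nk X WK WQ p q / \<tau>) a b - 1 / real m"

definition Vmat :: "nat \<Rightarrow> (nat \<Rightarrow> nat \<Rightarrow> real) \<Rightarrow> nat \<Rightarrow> nat \<Rightarrow> real" where
  "Vmat n X a b = (1 / real n) * (\<Sum>i<n. X a i * X b i)"

definition Vbar :: "nat \<Rightarrow> nat \<Rightarrow> (nat \<Rightarrow> nat \<Rightarrow> real) \<Rightarrow> nat \<Rightarrow> real" where
  "Vbar m n X a = (1 / real m) * (\<Sum>v<m. Vmat n X a v)"

definition Vbarbar :: "nat \<Rightarrow> nat \<Rightarrow> (nat \<Rightarrow> nat \<Rightarrow> real) \<Rightarrow> real" where
  "Vbarbar m n X = (1 / real m ^ 2) * (\<Sum>v<m. \<Sum>k<m. Vmat n X v k)"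

definition S1 :: "nat \<Rightarrow> nat \<Rightarrow> (nat \<Rightarrow> nat \<Rightarrow> real) \<Rightarrow> nat \<Rightarrow> nat \<Rightarrow> nat \<Rightarrow> nat \<Rightarrow> real" where
  "S1 m n X a d b w =
     Vmat n X a b * (Vmat n X d w - Vbar m n X d - Vbar m n X w + Vbarbar m n X)"

definition kdelta :: "nat \<Rightarrow> nat \<Rightarrow> real" where
  "kdelta a b = (if a = b then 1 else 0)"

end

theory Submission
  imports Defs
begin


lemma G_prob: "prob_space std_gauss"
  unfolding std_gauss_def by (rule prob_space_normal_density) simp

lemma G_sets[simp, measurable_cong]: "sets std_gauss = sets borel"
  unfolding std_gauss_def by simp

lemma G_int_pow: "integrable std_gauss (\<lambda>x. x ^ k)"
  unfolding std_gauss_def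
  by (subst integrable_density) (auto simp: integrable_std_normal_moment normal_density_nonneg)

lemma G_integral_pow: "integral\<^sup>L std_gauss (\<lambda>x. x ^ k) = integral\<^sup>L lborel (\<lambda>x. std_normal_density x * x ^ k)"
  unfolding std_gauss_def
  by (subst integral_density) (auto simp: normal_density_nonneg)

lemma G_mean: "integral\<^sup>L std_gauss (\<lambda>x. x) = 0"
  using G_integral_pow[of 1] integral_std_normal_moment_odd[of 0] by simp

lemma G_var: "integral\<^sup>L std_gauss (\<lambda>x. x^2) = 1"
  using G_integral_pow[of 2] integral_std_normal_moment_even[of 1] by simp

lemma G_int_id: "integrable std_gauss (\<lambda>x. x)"
  using G_int_pow[of 1] by simp

interpretation GP: product_prob_space "\<lambda>_. std_gauss" I for I
  proof -
  interpret prob_space std_gauss by (rule G_prob)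
  show "product_prob_space (\<lambda>_. std_gauss)" by unfold_locales
qed

lemma GM_prob: "prob_space (gauss_matrix n nk)"
  unfolding gauss_matrix_def by (rule prob_space_PiM) (rule G_prob)

lemma PM_prod1:
  fixes f :: "real \<Rightarrow> real"
  assumes "finite I" "j \<in> I"
  shows "(\<lambda>x. f (x j)) = (\<lambda>x. \<Prod>i\<in>I. (if i = j then f else (\<lambda>_. 1)) (x i))"
proof
  fix x :: "'a \<Rightarrow> real"
  have "(\<Prod>i\<in>I. (if i = j then f else (\<lambda>_. 1)) (x i)) = (\<Prod>i\<in>I. (if i = j then f (x i) else 1))"
    by (intro prod.cong) auto
  then show "f (x j) = (\<Prod>i\<in>I. (if i = j then f else (\<lambda>_. 1)) (x i))" using assms by (simp add: prod.delta)
qed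

lemma PM_prod2:
  fixes f g :: "real \<Rightarrow> real"
  assumes "finite I" "j \<in> I" "k \<in> I" "j \<noteq> k"
  shows "(\<lambda>x. f (x j) * g (x k)) = (\<lambda>x. \<Prod>i\<in>I. (if i = j then f else if i = k then g else (\<lambda>_. 1)) (x i))"
proof
  fix x :: "'a \<Rightarrow> real"
  have "(\<Prod>i\<in>I. (if i = j then f else if i = k then g else (\<lambda>_. 1)) (x i))
      = (\<Prod>i\<in>I. (if i = j then f (x i) else 1) * (if i = k then g (x i) else 1))"
    using assms by (intro prod.cong) auto
  also have "\<dots> = f (x j) * g (x k)"
    using assms by (simp add: prod.distrib prod.delta)
  finally show "f (x j) * g (x k) = (\<Prod>i\<in>I. (if i = j then f else if i = k then g else (\<lambda>_. 1)) (x i))" ..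
qed

lemma G_int_const: "integrable std_gauss (\<lambda>_. c::real)"
proof -
  interpret prob_space std_gauss by (rule G_prob)
  show ?thesis by simp
qed

lemma G_measure_space[simp]: "measure std_gauss (space std_gauss) = 1"
  using prob_space.prob_space[OF G_prob] by simp

lemma G_integral_const[simp]: "integral\<^sup>L std_gauss (\<lambda>_. c::real) = c"
  using prob_space.prob_space[OF G_prob] by simp

lemma PM_integrable1:
  fixes f :: "real \<Rightarrow> real"
  assumes "finite I" "j \<in> I" "integrable std_gauss f"
  shows "integrable (PiM I (\<lambda>_. std_gauss)) (\<lambda>x. f (x j))"
  unfolding PM_prod1[OF assms(1,2)]
  by (rule GP.product_integrable_prod) (auto simp: assms G_int_const)

lemma PM_integral1:
  fixes f :: "real \<Rightarrow> real"
  assumes "finite I" "j \<in> I" "integrable std_gauss f"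
  shows "integral\<^sup>L (PiM I (\<lambda>_. std_gauss)) (\<lambda>x. f (x j)) = integral\<^sup>L std_gauss f"
proof -
  interpret prob_space std_gauss by (rule G_prob)
  show ?thesis
  unfolding PM_prod1[OF assms(1,2)]
proof (subst GP.product_integral_prod)
  have "(\<Prod>i\<in>I. integral\<^sup>L std_gauss (if i = j then f else (\<lambda>_. 1))) = (\<Prod>i\<in>I. if i = j then integral\<^sup>L std_gauss f else 1)"
    by (intro prod.cong) auto
  then show "(\<Prod>i\<in>I. integral\<^sup>L std_gauss (if i = j then f else (\<lambda>_. 1))) = integral\<^sup>L std_gauss f"
    using assms by (simp add: prod.delta)
qed (auto simp: assms G_int_const)
qed

lemma PM_integrable2:
  fixes f g :: "real \<Rightarrow> real"
  assumes "finite I" "j \<in> I" "k \<in> I" "j \<noteq> k" "integrable std_gauss f" "integrable std_gauss g"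
  shows "integrable (PiM I (\<lambda>_. std_gauss)) (\<lambda>x. f (x j) * g (x k))"
  unfolding PM_prod2[OF assms(1-4)]
  by (rule GP.product_integrable_prod) (auto simp: assms G_int_const)

lemma PM_integral2:
  fixes f g :: "real \<Rightarrow> real"
  assumes "finite I" "j \<in> I" "k \<in> I" "j \<noteq> k" "integrable std_gauss f" "integrable std_gauss g"
  shows "integral\<^sup>L (PiM I (\<lambda>_. std_gauss)) (\<lambda>x. f (x j) * g (x k)) = integral\<^sup>L std_gauss f * integral\<^sup>L std_gauss g"
proof -
  interpret prob_space std_gauss by (rule G_prob)
  have "(\<Prod>i\<in>I. integral\<^sup>L std_gauss (if i = j then f else if i = k then g else (\<lambda>_. 1)))
     = (\<Prod>i\<in>I. (if i = j then integral\<^sup>L std_gauss f else 1) * (if i = k then integral\<^sup>L std_gauss g else 1))"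
    using assms by (intro prod.cong) auto
  also have "\<dots> = integral\<^sup>L std_gauss f * integral\<^sup>L std_gauss g"
    using assms by (simp add: prod.distrib prod.delta)
  finally show ?thesis
  unfolding PM_prod2[OF assms(1-4)]
  by (subst GP.product_integral_prod) (auto simp: assms G_int_const)
qed

lemma PM_mean:
  assumes "finite I" "j \<in> I"
  shows "integral\<^sup>L (PiM I (\<lambda>_. std_gauss)) (\<lambda>x. x j) = 0"
  using PM_integral1[OF assms G_int_id] G_mean by simp

lemma PM_cov:
  assumes "finite I" "j \<in> I" "k \<in> I"
  shows "integral\<^sup>L (PiM I (\<lambda>_. std_gauss)) (\<lambda>x. x j * x k) = (if j = k then 1 else 0)"
proof (cases "j = k")
  case True
  then show ?thesis using PM_integral1[OF assms(1,2) G_int_pow[of 2]] G_var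
    by (simp add: power2_eq_square)
next
  case False
  then show ?thesis using PM_integral2[OF assms(1-3) False G_int_id G_int_id] G_mean by simp
qed

lemma PM_int_pow:
  assumes "finite I" "j \<in> I"
  shows "integrable (PiM I (\<lambda>_. std_gauss)) (\<lambda>x. x j ^ k)"
  using PM_integrable1[OF assms G_int_pow] .

lemma PM_int_mult:
  assumes "finite I" "j \<in> I" "k \<in> I"
  shows "integrable (PiM I (\<lambda>_. std_gauss)) (\<lambda>x. x j * x k)"
proof (cases "j = k")
  case True
  then show ?thesis using PM_int_pow[OF assms(1,2), of 2] by (simp add: power2_eq_square)
next
  case False
  then show ?thesis using PM_integrable2[OF assms(1-3) False G_int_id G_int_id] by simp
qed

lemma pair_prod:
  fixes f g :: "_ \<Rightarrow> real"
  assumes P1: "prob_space M1" and P2: "prob_space M2"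
    and f: "integrable M1 f" and g: "integrable M2 g"
  shows "integrable (M1 \<Otimes>\<^sub>M M2) (\<lambda>w. f (fst w) * g (snd w))"
    and "integral\<^sup>L (M1 \<Otimes>\<^sub>M M2) (\<lambda>w. f (fst w) * g (snd w)) = integral\<^sup>L M1 f * integral\<^sup>L M2 g"
proof -
  interpret p1: prob_space M1 by (rule P1)
  interpret p2: prob_space M2 by (rule P2)
  interpret pair_sigma_finite M1 M2 by unfold_locales
  have fm[measurable]: "f \<in> borel_measurable M1" using f by auto
  have gm[measurable]: "g \<in> borel_measurable M2" using g by auto
  have eq: "(\<lambda>w. f (fst w) * g (snd w)) = (\<lambda>(x,y). f x * g y)" by auto
  show int: "integrable (M1 \<Otimes>\<^sub>M M2) (\<lambda>w. f (fst w) * g (snd w))"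
  proof (rule Fubini_integrable)
    show "(\<lambda>w. f (fst w) * g (snd w)) \<in> borel_measurable (M1 \<Otimes>\<^sub>M M2)" by measurable
    have "(\<lambda>x. \<integral>y. norm (f (fst (x, y)) * g (snd (x, y))) \<partial>M2) = (\<lambda>x. \<bar>f x\<bar> * \<integral>y. \<bar>g y\<bar> \<partial>M2)"
      by (simp add: abs_mult)
    moreover have "integrable M1 (\<lambda>x. \<bar>f x\<bar> * \<integral>y. \<bar>g y\<bar> \<partial>M2)"
      using f by (intro integrable_mult_left integrable_abs)
    ultimately show "integrable M1 (\<lambda>x. \<integral>y. norm (f (fst (x, y)) * g (snd (x, y))) \<partial>M2)" by simp
    show "AE x in M1. integrable M2 (\<lambda>y. f (fst (x, y)) * g (snd (x, y)))"
      using g by (simp add: integrable_mult_right)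
  qed
  have "integral\<^sup>L (M1 \<Otimes>\<^sub>M M2) (\<lambda>(x,y). f x * g y) = (\<integral>x. (\<integral>y. f x * g y \<partial>M2) \<partial>M1)"
    using int unfolding eq by (rule integral_fst[symmetric])
  also have "\<dots> = (\<integral>x. f x * integral\<^sup>L M2 g \<partial>M1)" by simp
  also have "\<dots> = integral\<^sup>L M1 f * integral\<^sup>L M2 g" by simp
  finally show "integral\<^sup>L (M1 \<Otimes>\<^sub>M M2) (\<lambda>w. f (fst w) * g (snd w)) = integral\<^sup>L M1 f * integral\<^sup>L M2 g"
    unfolding eq .
qed



lemma exp_quad_bound:
  fixes x :: real assumes "\<bar>x\<bar> \<le> 1"
  shows "\<bar>exp x - 1 - x\<bar> \<le> x\<^sup>2"
proof (cases "x \<ge> 0")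
  case True
  have "1 + x \<le> exp x" by (rule exp_ge_add_one_self)
  then show ?thesis using exp_bound[of x] assms True zero_le_power2[of x] unfolding abs_le_iff by linarith
next
  case False
  define y where "y = - x"
  have y: "0 < y" "y \<le> 1" using False assms by (auto simp: y_def)
  have "exp y \<ge> 1 + y" by (rule exp_ge_add_one_self)
  have "exp x = 1 / exp y" by (simp add: y_def exp_minus field_simps)
  also have "\<dots> \<le> 1 / (1 + y)" using \<open>exp y \<ge> 1 + y\<close> y by (intro divide_left_mono) auto
  also have "\<dots> \<le> 1 - y + y\<^sup>2"
  proof -
    have "1 \<le> (1 - y + y\<^sup>2) * (1 + y)" using y by (simp add: algebra_simps power2_eq_square power3_eq_cube)
    then show ?thesis using y by (simp add: divide_simps)
  qed
  finally have "exp x \<le> 1 + x + x\<^sup>2" by (simp add: y_def)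
  moreover have "1 + x \<le> exp x" by (rule exp_ge_add_one_self)
  ultimately show ?thesis using zero_le_power2[of x] unfolding abs_le_iff by linarith
qed

lemma softmax_taylor:
  fixes x :: "nat \<Rightarrow> real" and v :: real
  assumes m: "0 < m" and b: "b < m" and xb: "\<And>c. c < m \<Longrightarrow> \<bar>x c\<bar> \<le> v"
  shows "\<bar>exp (x b) / (\<Sum>c<m. exp (x c)) - 1 / real m - (x b - (\<Sum>c<m. x c) / real m) / real m\<bar> \<le> 18 * v\<^sup>2"
proof -
  define D where "D = (\<Sum>c<m. exp (x c))"
  define Xb where "Xb = (\<Sum>c<m. x c) / real m"
  have v0: "0 \<le> v" using xb[OF b] by auto
  have mr: "real m \<ge> 1" using m by simp
  have Dpos: "D > 0" unfolding D_def using m by (intro sum_pos) auto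
  have "exp (x b) \<le> D" unfolding D_def using b by (intro member_le_sum) auto
  then have s01: "0 \<le> exp (x b) / D" "exp (x b) / D \<le> 1" using Dpos by auto
  have "\<bar>\<Sum>c<m. x c\<bar> \<le> (\<Sum>c<m. v)" using xb by (intro order_trans[OF sum_abs] sum_mono) auto
  then have Xb_le: "\<bar>Xb\<bar> \<le> v" using m by (simp add: Xb_def abs_divide divide_le_eq mult.commute)
  have xbb: "\<bar>x b - Xb\<bar> \<le> 2 * v" using xb[OF b] Xb_le by auto
  show ?thesis
  proof (cases "v \<le> 1")
    case False
    have "\<bar>(x b - Xb) / real m\<bar> \<le> 2 * v"
      using xbb mr v0 mult_left_mono[of "1::real" "real m" "2 * v"] by (simp add: abs_divide divide_le_eq)
    moreover have "\<bar>exp (x b) / D - 1 / real m\<bar> \<le> 1"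
    proof -
      have "0 < 1 / real m" "1 / real m \<le> 1" using mr by auto
      then show ?thesis using s01 unfolding abs_le_iff by linarith
    qed
    moreover have "1 + 2 * v \<le> 18 * v\<^sup>2" 
    proof -
      have "v * 1 \<le> v * v" using False by (intro mult_left_mono) auto
      then show ?thesis using False unfolding power2_eq_square by linarith
    qed
    ultimately show ?thesis unfolding D_def[symmetric] Xb_def[symmetric] by linarith
  next
    case True
    define r where "r c = exp (x c) - 1 - x c" for c
    define Rb where "Rb = (\<Sum>c<m. r c) / real m"
    have rb: "\<bar>r c\<bar> \<le> v\<^sup>2" if "c < m" for c
    proof -
      have "\<bar>x c\<bar> \<le> 1" using xb[OF that] True by auto
      then have "\<bar>r c\<bar> \<le> (x c)\<^sup>2" unfolding r_def by (rule exp_quad_bound)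
      also have "\<dots> \<le> v\<^sup>2" using xb[OF that] by (simp add: abs_le_square_iff[symmetric])
      finally show ?thesis .
    qed
    have "\<bar>\<Sum>c<m. r c\<bar> \<le> (\<Sum>c<m. v\<^sup>2)" using rb by (intro order_trans[OF sum_abs] sum_mono) auto
    then have Rb_le: "\<bar>Rb\<bar> \<le> v\<^sup>2" using m by (simp add: Rb_def abs_divide divide_le_eq mult.commute)
    have "D = (\<Sum>c<m. 1 + x c + r c)" unfolding D_def r_def by simp
    also have "\<dots> = real m * (1 + Xb + Rb)" using m by (simp add: sum.distrib Xb_def Rb_def field_simps)
    finally have Deq: "D = real m * (1 + Xb + Rb)" .
    have "(\<Sum>c<m. exp (-1)) \<le> D" unfolding D_def
    proof (intro sum_mono)
      fix c assume "c \<in> {..<m}"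
      then have "\<bar>x c\<bar> \<le> v" using xb by auto
      then show "exp (-1) \<le> exp (x c)" using True by auto
    qed
    moreover have "exp (-1::real) \<ge> 1/3" using exp_le by (simp add: exp_minus field_simps)
    ultimately have Dlow: "D \<ge> real m / 3"
    proof -
      assume a: "(\<Sum>c<m. exp (-1)) \<le> D" "exp (-1::real) \<ge> 1/3"
      have "real m * (1/3) \<le> real m * exp (-1)" using a(2) by (intro mult_left_mono) auto
      then show ?thesis using a(1) by simp
    qed
    have key: "exp (x b) / D - 1 / real m - (x b - Xb) / real m = (r b - Rb - (x b - Xb) * (Xb + Rb)) / D"
    proof -
      define K where "K = 1 + Xb + Rb"
      have Km: "D = real m * K" using Deq K_def by simp
      have K0: "K \<noteq> 0" using Dpos Km by auto
      have m0: "real m \<noteq> 0" using m by auto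
      have 1: "1 / real m = K / D" using K0 m0 Km by simp
      have 2: "(x b - Xb) / real m = (x b - Xb) * K / D" using K0 m0 Km by simp
      have e: "exp (x b) = 1 + x b + r b" by (simp add: r_def)
      have "exp (x b) / D - 1 / real m - (x b - Xb) / real m = (exp (x b) - K - (x b - Xb) * K) / D"
        unfolding 1 2 by (simp add: diff_divide_distrib)
      also have "exp (x b) - K - (x b - Xb) * K = r b - Rb - (x b - Xb) * (Xb + Rb)"
        unfolding e K_def by (simp add: algebra_simps)
      finally show ?thesis .
    qed
    have "\<bar>r b - Rb - (x b - Xb) * (Xb + Rb)\<bar> \<le> v\<^sup>2 + v\<^sup>2 + 2 * v * (v + v\<^sup>2)"
    proof -
      have "\<bar>(x b - Xb) * (Xb + Rb)\<bar> \<le> 2 * v * (v + v\<^sup>2)"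
        unfolding abs_mult using xbb Xb_le Rb_le v0 by (intro mult_mono) auto
      then show ?thesis using rb[OF b] Rb_le by linarith
    qed
    also have "\<dots> \<le> 6 * v\<^sup>2"
    proof -
      have "v * v\<^sup>2 \<le> 1 * v\<^sup>2" using True by (intro mult_right_mono) auto
      moreover have "v\<^sup>2 + v\<^sup>2 + 2 * v * (v + v\<^sup>2) = 4 * v\<^sup>2 + 2 * (v * v\<^sup>2)"
        by (simp add: algebra_simps power2_eq_square)
      ultimately show ?thesis by linarith
    qed
    finally have num: "\<bar>r b - Rb - (x b - Xb) * (Xb + Rb)\<bar> \<le> 6 * v\<^sup>2" .
    have "\<bar>(r b - Rb - (x b - Xb) * (Xb + Rb)) / D\<bar> \<le> 6 * v\<^sup>2 / (real m / 3)"
      unfolding abs_divide using Dpos Dlow num m by (intro frac_le) auto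
    also have "\<dots> = 18 * v\<^sup>2 / real m" by simp
    also have "\<dots> \<le> 18 * v\<^sup>2 / 1" using mr by (intro divide_left_mono) auto
    finally show ?thesis unfolding D_def[symmetric] Xb_def[symmetric] key by simp
  qed
qed



lemma expand4:
  fixes e :: "nat \<Rightarrow> 'a \<Rightarrow> real" and d :: "nat \<Rightarrow> real"
  assumes P: "prob_space P"
    and em: "\<And>k. e k \<in> borel_measurable P"
    and eb: "\<And>k x. \<bar>e k x\<bar> \<le> 1"
  shows "integral\<^sup>L P (\<lambda>x. (d 1 + e 1 x) * (d 2 + e 2 x) * (d 3 + e 3 x) * (d 4 + e 4 x))
        - integral\<^sup>L P (\<lambda>x. (d 1 + e 1 x) * (d 2 + e 2 x)) * integral\<^sup>L P (\<lambda>x. (d 3 + e 3 x) * (d 4 + e 4 x))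
      = d 1 * d 3 * integral\<^sup>L P (\<lambda>x. e 2 x * e 4 x) + d 1 * d 4 * integral\<^sup>L P (\<lambda>x. e 2 x * e 3 x)
      + d 2 * d 3 * integral\<^sup>L P (\<lambda>x. e 1 x * e 4 x) + d 2 * d 4 * integral\<^sup>L P (\<lambda>x. e 1 x * e 3 x)
      + d 1 * integral\<^sup>L P (\<lambda>x. e 2 x * e 3 x * e 4 x) + d 2 * integral\<^sup>L P (\<lambda>x. e 1 x * e 3 x * e 4 x)
      + d 3 * integral\<^sup>L P (\<lambda>x. e 1 x * e 2 x * e 4 x) + d 4 * integral\<^sup>L P (\<lambda>x. e 1 x * e 2 x * e 3 x)
      + integral\<^sup>L P (\<lambda>x. e 1 x * e 2 x * e 3 x * e 4 x)
      - (d 1 * integral\<^sup>L P (e 2) + d 2 * integral\<^sup>L P (e 1) + integral\<^sup>L P (\<lambda>x. e 1 x * e 2 x))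
      * (d 3 * integral\<^sup>L P (e 4) + d 4 * integral\<^sup>L P (e 3) + integral\<^sup>L P (\<lambda>x. e 3 x * e 4 x))"
proof -
  interpret prob_space P by (rule P)
  have bint: "integrable P f" if "f \<in> borel_measurable P" "\<And>x. \<bar>f x\<bar> \<le> 1" for f :: "'a \<Rightarrow> real"
    using that by (intro integrable_const_bound[where B=1]) auto
  have i1[simp]: "integrable P (e i)" for i using em eb by (intro bint) auto
  have i2[simp]: "integrable P (\<lambda>x. e i x * e j x)" for i j
    using em eb by (intro bint) (auto simp: abs_mult intro: mult_le_one)
  have i3[simp]: "integrable P (\<lambda>x. e i x * e j x * e k x)" for i j k
    using em eb by (intro bint) (auto simp: abs_mult intro!: mult_le_one)
  have i4[simp]: "integrable P (\<lambda>x. e i x * e j x * e k x * e l x)" for i j k l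
    using em eb by (intro bint) (auto simp: abs_mult intro!: mult_le_one)
  have c1[simp]: "integral\<^sup>L P (\<lambda>x. c :: real) = c" for c by (simp add: prob_space)
  have "integral\<^sup>L P (\<lambda>x. (d 1 + e 1 x) * (d 2 + e 2 x) * (d 3 + e 3 x) * (d 4 + e 4 x))
      = integral\<^sup>L P (\<lambda>x. d 1 * d 2 * d 3 * d 4
         + (d 2 * d 3 * d 4) * e 1 x + (d 1 * d 3 * d 4) * e 2 x + (d 1 * d 2 * d 4) * e 3 x + (d 1 * d 2 * d 3) * e 4 x
         + (d 3 * d 4) * (e 1 x * e 2 x) + (d 2 * d 4) * (e 1 x * e 3 x) + (d 2 * d 3) * (e 1 x * e 4 x)
         + (d 1 * d 4) * (e 2 x * e 3 x) + (d 1 * d 3) * (e 2 x * e 4 x) + (d 1 * d 2) * (e 3 x * e 4 x)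
         + d 4 * (e 1 x * e 2 x * e 3 x) + d 3 * (e 1 x * e 2 x * e 4 x) + d 2 * (e 1 x * e 3 x * e 4 x)
         + d 1 * (e 2 x * e 3 x * e 4 x) + e 1 x * e 2 x * e 3 x * e 4 x)"
    by (rule arg_cong[where f="integral\<^sup>L P"], rule ext) algebra
  also have "\<dots> = d 1 * d 2 * d 3 * d 4
         + (d 2 * d 3 * d 4) * integral\<^sup>L P (e 1) + (d 1 * d 3 * d 4) * integral\<^sup>L P (e 2)
         + (d 1 * d 2 * d 4) * integral\<^sup>L P (e 3) + (d 1 * d 2 * d 3) * integral\<^sup>L P (e 4)
         + (d 3 * d 4) * integral\<^sup>L P (\<lambda>x. e 1 x * e 2 x) + (d 2 * d 4) * integral\<^sup>L P (\<lambda>x. e 1 x * e 3 x)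
         + (d 2 * d 3) * integral\<^sup>L P (\<lambda>x. e 1 x * e 4 x)
         + (d 1 * d 4) * integral\<^sup>L P (\<lambda>x. e 2 x * e 3 x) + (d 1 * d 3) * integral\<^sup>L P (\<lambda>x. e 2 x * e 4 x)
         + (d 1 * d 2) * integral\<^sup>L P (\<lambda>x. e 3 x * e 4 x)
         + d 4 * integral\<^sup>L P (\<lambda>x. e 1 x * e 2 x * e 3 x) + d 3 * integral\<^sup>L P (\<lambda>x. e 1 x * e 2 x * e 4 x)
         + d 2 * integral\<^sup>L P (\<lambda>x. e 1 x * e 3 x * e 4 x)
         + d 1 * integral\<^sup>L P (\<lambda>x. e 2 x * e 3 x * e 4 x) + integral\<^sup>L P (\<lambda>x. e 1 x * e 2 x * e 3 x * e 4 x)"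
    by (simp add: integrable_add integrable_mult_right prob_space.prob_space[OF P])
  finally have E4: "integral\<^sup>L P (\<lambda>x. (d 1 + e 1 x) * (d 2 + e 2 x) * (d 3 + e 3 x) * (d 4 + e 4 x)) = \<dots>" .
  have E2: "integral\<^sup>L P (\<lambda>x. (d i + e i x) * (d j + e j x))
     = d i * d j + d i * integral\<^sup>L P (e j) + d j * integral\<^sup>L P (e i) + integral\<^sup>L P (\<lambda>x. e i x * e j x)" for i j
  proof -
    have "integral\<^sup>L P (\<lambda>x. (d i + e i x) * (d j + e j x))
      = integral\<^sup>L P (\<lambda>x. d i * d j + d i * e j x + d j * e i x + e i x * e j x)"
      by (rule arg_cong[where f="integral\<^sup>L P"], rule ext) algebra
    also have "\<dots> = d i * d j + d i * integral\<^sup>L P (e j) + d j * integral\<^sup>L P (e i) + integral\<^sup>L P (\<lambda>x. e i x * e j x)"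
      by (simp add: integrable_add integrable_mult_right prob_space.prob_space[OF P])
    finally show ?thesis .
  qed
  show ?thesis unfolding E4 E2 by algebra
qed

lemma abs_mult_le: "\<bar>a\<bar> \<le> A \<Longrightarrow> \<bar>b\<bar> \<le> B \<Longrightarrow> \<bar>a * b\<bar> \<le> A * (B::real)"
  unfolding abs_mult by (rule mult_mono) auto

lemma abs_int_le:
  fixes f g :: "'a \<Rightarrow> real"
  assumes "integrable M f" "integrable M g" "\<And>x. x \<in> space M \<Longrightarrow> \<bar>f x\<bar> \<le> g x"
  shows "\<bar>integral\<^sup>L M f\<bar> \<le> integral\<^sup>L M g"
proof -
  have "\<bar>integral\<^sup>L M f\<bar> \<le> integral\<^sup>L M (\<lambda>x. \<bar>f x\<bar>)" using integral_norm_bound[of M f] by simp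
  also have "\<dots> \<le> integral\<^sup>L M g" using assms by (intro integral_mono) auto
  finally show ?thesis .
qed

lemma cov_bound:
  fixes e L :: "nat \<Rightarrow> 'a \<Rightarrow> real" and Mf :: "'a \<Rightarrow> real" and d :: "nat \<Rightarrow> real" and t :: real
  assumes P: "prob_space P" and t: "0 < t" "t \<le> 1"
    and em: "\<And>k. e k \<in> borel_measurable P"
    and Lm: "\<And>k. L k \<in> borel_measurable P"
    and eb: "\<And>k x. \<bar>e k x\<bar> \<le> 1"
    and eL: "\<And>k x. \<bar>e k x - t * L k x\<bar> \<le> 18 * t\<^sup>2 * (Mf x)\<^sup>2"
    and Lb: "\<And>k x. \<bar>L k x\<bar> \<le> 2 * Mf x"
    and M0: "\<And>x. 0 \<le> Mf x"
    and M2: "integrable P (\<lambda>x. Mf x ^ 2)" and M3: "integrable P (\<lambda>x. Mf x ^ 3)"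
    and EL: "\<And>k. integral\<^sup>L P (L k) = 0"
    and db: "\<And>k. \<bar>d k\<bar> \<le> 1"
  shows "\<bar>integral\<^sup>L P (\<lambda>x. (d 1 + e 1 x) * (d 2 + e 2 x) * (d 3 + e 3 x) * (d 4 + e 4 x))
        - integral\<^sup>L P (\<lambda>x. (d 1 + e 1 x) * (d 2 + e 2 x)) * integral\<^sup>L P (\<lambda>x. (d 3 + e 3 x) * (d 4 + e 4 x))
        - t\<^sup>2 * (d 1 * d 3 * integral\<^sup>L P (\<lambda>x. L 2 x * L 4 x) + d 1 * d 4 * integral\<^sup>L P (\<lambda>x. L 2 x * L 3 x)
                + d 2 * d 3 * integral\<^sup>L P (\<lambda>x. L 1 x * L 4 x) + d 2 * d 4 * integral\<^sup>L P (\<lambda>x. L 1 x * L 3 x))\<bar>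
      \<le> 200000 * t ^ 3 * (integral\<^sup>L P (\<lambda>x. Mf x ^ 3) + (integral\<^sup>L P (\<lambda>x. Mf x ^ 2))\<^sup>2)"
proof -
  interpret prob_space P by (rule P)
  define h2 where "h2 = integral\<^sup>L P (\<lambda>x. Mf x ^ 2)"
  define h3 where "h3 = integral\<^sup>L P (\<lambda>x. Mf x ^ 3)"
  have h2p: "0 \<le> h2" unfolding h2_def using M0 by (intro integral_nonneg_AE) auto
  have h3p: "0 \<le> h3" unfolding h3_def using M0 by (intro integral_nonneg_AE) auto
  have bint: "integrable P f" if "f \<in> borel_measurable P" "\<And>x. \<bar>f x\<bar> \<le> 1" for f :: "'a \<Rightarrow> real"
    using that by (intro integrable_const_bound[where B=1]) auto
  have i1: "integrable P (e i)" for i using em eb by (intro bint) auto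
  have i2: "integrable P (\<lambda>x. e i x * e j x)" for i j
    using em eb by (intro bint) (auto simp: abs_mult intro: mult_le_one)
  have i3: "integrable P (\<lambda>x. e i x * e j x * e k x)" for i j k
    using em eb by (intro bint) (auto simp: abs_mult intro!: mult_le_one)
  have i4: "integrable P (\<lambda>x. e i x * e j x * e k x * e l x)" for i j k l
    using em eb by (intro bint) (auto simp: abs_mult intro!: mult_le_one)
  have iLL: "integrable P (\<lambda>x. L i x * L j x)" for i j
  proof (rule Bochner_Integration.integrable_bound[OF integrable_mult_right[OF M2, of 4]])
    show "(\<lambda>x. L i x * L j x) \<in> borel_measurable P" using Lm by measurable
    show "AE x in P. norm (L i x * L j x) \<le> norm (4 * Mf x ^ 2)"
    proof (intro AE_I2)
      fix x
      have "\<bar>L i x * L j x\<bar> \<le> (2 * Mf x) * (2 * Mf x)" by (intro abs_mult_le Lb)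
      then show "norm (L i x * L j x) \<le> norm (4 * Mf x ^ 2)" using M0[of x] by (simp add: power2_eq_square)
    qed
  qed
  have iL: "integrable P (L i)" for i
  proof (rule Bochner_Integration.integrable_bound[OF Bochner_Integration.integrable_add[OF integrable_const[of 1] M2]])
    show "L i \<in> borel_measurable P" by (rule Lm)
    show "AE x in P. norm (L i x) \<le> norm (1 + Mf x ^ 2)"
    proof (intro AE_I2)
      fix x
      have "0 \<le> (Mf x - 1) * (Mf x - 1)" by simp
      then have "2 * Mf x \<le> 1 + Mf x ^ 2" by (simp add: algebra_simps power2_eq_square)
      then show "norm (L i x) \<le> norm (1 + Mf x ^ 2)" using Lb[of i x] M0[of x] by simp
    qed
  qed
  have eM: "\<bar>e k x\<bar> \<le> 20 * t * Mf x" for k x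
  proof (cases "t * Mf x \<le> 1")
    case True
    have "\<bar>e k x\<bar> \<le> \<bar>t * L k x\<bar> + 18 * t\<^sup>2 * (Mf x)\<^sup>2" using eL[of k x] by linarith
    moreover have "\<bar>t * L k x\<bar> \<le> t * (2 * Mf x)" using t Lb[of k x] by (simp add: abs_mult mult_left_mono)
    moreover have "18 * t\<^sup>2 * (Mf x)\<^sup>2 \<le> 18 * (t * Mf x)"
    proof -
      have "(t * Mf x) * (t * Mf x) \<le> (t * Mf x) * 1" using True t M0[of x] by (intro mult_left_mono) auto
      then show ?thesis by (simp add: power2_eq_square algebra_simps)
    qed
    ultimately show ?thesis by (simp add: algebra_simps)
  next
    case False
    then show ?thesis using eb[of k x] by linarith
  qed
  have p2: "\<bar>e i x * e j x\<bar> \<le> 400 * t\<^sup>2 * Mf x ^ 2" for i j x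
    using abs_mult_le[OF eM[of i x] eM[of j x]] by (simp add: power2_eq_square algebra_simps)
  have p3: "\<bar>e i x * e j x * e k x\<bar> \<le> 8000 * t ^ 3 * Mf x ^ 3" for i j k x
    using abs_mult_le[OF abs_mult_le[OF eM[of i x] eM[of j x]] eM[of k x]] by (simp add: power3_eq_cube algebra_simps)
  have p4: "\<bar>e i x * e j x * e k x * e l x\<bar> \<le> 8000 * t ^ 3 * Mf x ^ 3" for i j k l x
  proof -
    have "\<bar>e i x * e j x * e k x * e l x\<bar> \<le> (8000 * t ^ 3 * Mf x ^ 3) * 1"
      by (rule abs_mult_le[OF p3 eb])
    then show ?thesis by simp
  qed
  have pd: "\<bar>e i x * e j x - t\<^sup>2 * (L i x * L j x)\<bar> \<le> 396 * t ^ 3 * Mf x ^ 3" for i j x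
  proof -
    have eq: "e i x * e j x - t\<^sup>2 * (L i x * L j x) = (e i x - t * L i x) * e j x + (t * L i x) * (e j x - t * L j x)"
      by (simp add: algebra_simps power2_eq_square)
    have a: "\<bar>(e i x - t * L i x) * e j x\<bar> \<le> (18 * t\<^sup>2 * (Mf x)\<^sup>2) * (20 * t * Mf x)"
      by (rule abs_mult_le[OF eL eM])
    have "\<bar>t * L i x\<bar> \<le> t * (2 * Mf x)" using t Lb[of i x] by (simp add: abs_mult mult_left_mono)
    then have b: "\<bar>(t * L i x) * (e j x - t * L j x)\<bar> \<le> (t * (2 * Mf x)) * (18 * t\<^sup>2 * (Mf x)\<^sup>2)"
      by (rule abs_mult_le[OF _ eL])
    have "\<bar>e i x * e j x - t\<^sup>2 * (L i x * L j x)\<bar> \<le> (18 * t\<^sup>2 * (Mf x)\<^sup>2) * (20 * t * Mf x) + (t * (2 * Mf x)) * (18 * t\<^sup>2 * (Mf x)\<^sup>2)"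
      unfolding eq using a b by linarith
    also have "\<dots> = 396 * t ^ 3 * Mf x ^ 3" by (simp add: power2_eq_square power3_eq_cube algebra_simps)
    finally show ?thesis .
  qed
  have iM2: "integrable P (\<lambda>x. c * Mf x ^ 2)" for c using M2 by (rule integrable_mult_right)
  have iM3: "integrable P (\<lambda>x. c * Mf x ^ 3)" for c using M3 by (rule integrable_mult_right)
  have B1: "\<bar>integral\<^sup>L P (e k)\<bar> \<le> 18 * t\<^sup>2 * h2" for k
  proof -
    have "integral\<^sup>L P (e k) = integral\<^sup>L P (\<lambda>x. e k x - t * L k x)"
      using i1 iL EL by (simp add: integral_diff)
    also have "\<bar>\<dots>\<bar> \<le> integral\<^sup>L P (\<lambda>x. 18 * t\<^sup>2 * Mf x ^ 2)"
      by (rule abs_int_le) (use i1 iL iM2 eL in auto)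
    finally show ?thesis by (simp add: h2_def)
  qed
  have B2: "\<bar>integral\<^sup>L P (\<lambda>x. e i x * e j x) - t\<^sup>2 * integral\<^sup>L P (\<lambda>x. L i x * L j x)\<bar> \<le> 396 * t ^ 3 * h3" for i j
  proof -
    have "integral\<^sup>L P (\<lambda>x. e i x * e j x) - t\<^sup>2 * integral\<^sup>L P (\<lambda>x. L i x * L j x)
        = integral\<^sup>L P (\<lambda>x. e i x * e j x - t\<^sup>2 * (L i x * L j x))"
      using i2 iLL by (simp add: integral_diff)
    also have "\<bar>\<dots>\<bar> \<le> integral\<^sup>L P (\<lambda>x. 396 * t ^ 3 * Mf x ^ 3)"
      by (rule abs_int_le) (use i2 iLL iM3 pd in auto)
    finally show ?thesis by (simp add: h3_def)
  qed
  have B3: "\<bar>integral\<^sup>L P (\<lambda>x. e i x * e j x)\<bar> \<le> 400 * t\<^sup>2 * h2" for i j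
  proof -
    have "\<bar>integral\<^sup>L P (\<lambda>x. e i x * e j x)\<bar> \<le> integral\<^sup>L P (\<lambda>x. 400 * t\<^sup>2 * Mf x ^ 2)"
      by (rule abs_int_le) (use i2 iM2 p2 in auto)
    then show ?thesis by (simp add: h2_def)
  qed
  have B4: "\<bar>integral\<^sup>L P (\<lambda>x. e i x * e j x * e k x)\<bar> \<le> 8000 * t ^ 3 * h3" for i j k
  proof -
    have "\<bar>integral\<^sup>L P (\<lambda>x. e i x * e j x * e k x)\<bar> \<le> integral\<^sup>L P (\<lambda>x. 8000 * t ^ 3 * Mf x ^ 3)"
      by (rule abs_int_le) (use i3 iM3 p3 in auto)
    then show ?thesis by (simp add: h3_def)
  qed
  have B5: "\<bar>integral\<^sup>L P (\<lambda>x. e i x * e j x * e k x * e l x)\<bar> \<le> 8000 * t ^ 3 * h3" for i j k l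
  proof -
    have "\<bar>integral\<^sup>L P (\<lambda>x. e i x * e j x * e k x * e l x)\<bar> \<le> integral\<^sup>L P (\<lambda>x. 8000 * t ^ 3 * Mf x ^ 3)"
      by (rule abs_int_le) (use i4 iM3 p4 in auto)
    then show ?thesis by (simp add: h3_def)
  qed
  define F where "F = d 1 * integral\<^sup>L P (e 2) + d 2 * integral\<^sup>L P (e 1) + integral\<^sup>L P (\<lambda>x. e 1 x * e 2 x)"
  define G where "G = d 3 * integral\<^sup>L P (e 4) + d 4 * integral\<^sup>L P (e 3) + integral\<^sup>L P (\<lambda>x. e 3 x * e 4 x)"
  have dm: "\<bar>d k * y\<bar> \<le> Y" if "\<bar>y\<bar> \<le> Y" for k y Y
    using abs_mult_le[OF db[of k] that] by simp
  have Fb: "\<bar>F\<bar> \<le> 436 * t\<^sup>2 * h2" unfolding F_def using dm[OF B1[of 2], of 1] dm[OF B1[of 1], of 2] B3[of 1 2] by linarith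
  have Gb: "\<bar>G\<bar> \<le> 436 * t\<^sup>2 * h2" unfolding G_def using dm[OF B1[of 4], of 3] dm[OF B1[of 3], of 4] B3[of 3 4] by linarith
  have "\<bar>F * G\<bar> \<le> (436 * t\<^sup>2 * h2) * (436 * t\<^sup>2 * h2)" by (rule abs_mult_le[OF Fb Gb])
  also have "\<dots> = 190096 * t ^ 3 * (t * h2\<^sup>2)" by (simp add: power2_eq_square power3_eq_cube)
  also have "\<dots> \<le> 190096 * t ^ 3 * (1 * h2\<^sup>2)" using t by (intro mult_left_mono mult_right_mono) auto
  finally have FG: "\<bar>F * G\<bar> \<le> 190096 * t ^ 3 * h2\<^sup>2" by simp
  have dd: "\<bar>d k * d l * y\<bar> \<le> Y" if "\<bar>y\<bar> \<le> Y" for k l y Y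
    using dm[OF dm[OF that, of l], of k] by (simp add: mult.assoc)
  define I4 where "I4 = integral\<^sup>L P (\<lambda>x. (d 1 + e 1 x) * (d 2 + e 2 x) * (d 3 + e 3 x) * (d 4 + e 4 x))"
  define I12 where "I12 = integral\<^sup>L P (\<lambda>x. (d 1 + e 1 x) * (d 2 + e 2 x))"
  define I34 where "I34 = integral\<^sup>L P (\<lambda>x. (d 3 + e 3 x) * (d 4 + e 4 x))"
  have ex: "I4 - I12 * I34 = d 1 * d 3 * integral\<^sup>L P (\<lambda>x. e 2 x * e 4 x) + d 1 * d 4 * integral\<^sup>L P (\<lambda>x. e 2 x * e 3 x)
      + d 2 * d 3 * integral\<^sup>L P (\<lambda>x. e 1 x * e 4 x) + d 2 * d 4 * integral\<^sup>L P (\<lambda>x. e 1 x * e 3 x)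
      + d 1 * integral\<^sup>L P (\<lambda>x. e 2 x * e 3 x * e 4 x) + d 2 * integral\<^sup>L P (\<lambda>x. e 1 x * e 3 x * e 4 x)
      + d 3 * integral\<^sup>L P (\<lambda>x. e 1 x * e 2 x * e 4 x) + d 4 * integral\<^sup>L P (\<lambda>x. e 1 x * e 2 x * e 3 x)
      + integral\<^sup>L P (\<lambda>x. e 1 x * e 2 x * e 3 x * e 4 x) - F * G"
    unfolding I4_def I12_def I34_def F_def G_def by (rule expand4[where P=P and e=e and d=d, OF P em eb])
  have eqn: "I4 - I12 * I34
        - t\<^sup>2 * (d 1 * d 3 * integral\<^sup>L P (\<lambda>x. L 2 x * L 4 x) + d 1 * d 4 * integral\<^sup>L P (\<lambda>x. L 2 x * L 3 x)
                + d 2 * d 3 * integral\<^sup>L P (\<lambda>x. L 1 x * L 4 x) + d 2 * d 4 * integral\<^sup>L P (\<lambda>x. L 1 x * L 3 x))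
      = d 1 * d 3 * (integral\<^sup>L P (\<lambda>x. e 2 x * e 4 x) - t\<^sup>2 * integral\<^sup>L P (\<lambda>x. L 2 x * L 4 x))
      + d 1 * d 4 * (integral\<^sup>L P (\<lambda>x. e 2 x * e 3 x) - t\<^sup>2 * integral\<^sup>L P (\<lambda>x. L 2 x * L 3 x))
      + d 2 * d 3 * (integral\<^sup>L P (\<lambda>x. e 1 x * e 4 x) - t\<^sup>2 * integral\<^sup>L P (\<lambda>x. L 1 x * L 4 x))
      + d 2 * d 4 * (integral\<^sup>L P (\<lambda>x. e 1 x * e 3 x) - t\<^sup>2 * integral\<^sup>L P (\<lambda>x. L 1 x * L 3 x))
      + d 1 * integral\<^sup>L P (\<lambda>x. e 2 x * e 3 x * e 4 x) + d 2 * integral\<^sup>L P (\<lambda>x. e 1 x * e 3 x * e 4 x)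
      + d 3 * integral\<^sup>L P (\<lambda>x. e 1 x * e 2 x * e 4 x) + d 4 * integral\<^sup>L P (\<lambda>x. e 1 x * e 2 x * e 3 x)
      + integral\<^sup>L P (\<lambda>x. e 1 x * e 2 x * e 3 x * e 4 x) - F * G"
    unfolding ex by (simp add: algebra_simps)
  have bnd: "\<bar>d 1 * d 3 * (integral\<^sup>L P (\<lambda>x. e 2 x * e 4 x) - t\<^sup>2 * integral\<^sup>L P (\<lambda>x. L 2 x * L 4 x))
      + d 1 * d 4 * (integral\<^sup>L P (\<lambda>x. e 2 x * e 3 x) - t\<^sup>2 * integral\<^sup>L P (\<lambda>x. L 2 x * L 3 x))
      + d 2 * d 3 * (integral\<^sup>L P (\<lambda>x. e 1 x * e 4 x) - t\<^sup>2 * integral\<^sup>L P (\<lambda>x. L 1 x * L 4 x))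
      + d 2 * d 4 * (integral\<^sup>L P (\<lambda>x. e 1 x * e 3 x) - t\<^sup>2 * integral\<^sup>L P (\<lambda>x. L 1 x * L 3 x))
      + d 1 * integral\<^sup>L P (\<lambda>x. e 2 x * e 3 x * e 4 x) + d 2 * integral\<^sup>L P (\<lambda>x. e 1 x * e 3 x * e 4 x)
      + d 3 * integral\<^sup>L P (\<lambda>x. e 1 x * e 2 x * e 4 x) + d 4 * integral\<^sup>L P (\<lambda>x. e 1 x * e 2 x * e 3 x)
      + integral\<^sup>L P (\<lambda>x. e 1 x * e 2 x * e 3 x * e 4 x) - F * G\<bar>
     \<le> 4 * (396 * t ^ 3 * h3) + 5 * (8000 * t ^ 3 * h3) + 190096 * t ^ 3 * h2\<^sup>2"
    using dd[OF B2[of 2 4], of 1 3] dd[OF B2[of 2 3], of 1 4] dd[OF B2[of 1 4], of 2 3] dd[OF B2[of 1 3], of 2 4]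
      dm[OF B4[of 2 3 4], of 1] dm[OF B4[of 1 3 4], of 2] dm[OF B4[of 1 2 4], of 3] dm[OF B4[of 1 2 3], of 4]
      B5[of 1 2 3 4] FG
    unfolding abs_le_iff by (intro conjI; linarith)
  have K: "4 * (396 * t ^ 3 * h3) + 5 * (8000 * t ^ 3 * h3) + 190096 * t ^ 3 * h2\<^sup>2 \<le> 200000 * t ^ 3 * (h3 + h2\<^sup>2)"
    using h3p h2p t by (simp add: algebra_simps)
  have "\<bar>I4 - I12 * I34
        - t\<^sup>2 * (d 1 * d 3 * integral\<^sup>L P (\<lambda>x. L 2 x * L 4 x) + d 1 * d 4 * integral\<^sup>L P (\<lambda>x. L 2 x * L 3 x)
                + d 2 * d 3 * integral\<^sup>L P (\<lambda>x. L 1 x * L 4 x) + d 2 * d 4 * integral\<^sup>L P (\<lambda>x. L 1 x * L 3 x))\<bar>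
       \<le> 200000 * t ^ 3 * (h3 + h2\<^sup>2)"
    unfolding eqn using bnd K by linarith
  then show ?thesis by (simp only: h2_def h3_def I4_def I12_def I34_def)
qed



definition lin :: "nat \<Rightarrow> (nat \<Rightarrow> real) \<Rightarrow> nat \<Rightarrow> (nat \<times> nat \<Rightarrow> real) \<Rightarrow> real" where
  "lin n \<alpha> c x = (\<Sum>i<n. \<alpha> i * x (i, c))"

lemma Y_lin: "Ymat n nk X WK WQ a b = (1 / real n) * (\<Sum>c<nk. lin n (X a) c WK * lin n (X b) c WQ)"
proof -
  have "(\<Sum>i<n. \<Sum>j<n. \<Sum>c<nk. X a i * WK (i, c) * WQ (j, c) * X b j)
      = (\<Sum>i<n. \<Sum>c<nk. \<Sum>j<n. X a i * WK (i, c) * WQ (j, c) * X b j)"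
    by (rule sum.cong[OF refl], rule sum.swap)
  also have "\<dots> = (\<Sum>c<nk. \<Sum>i<n. \<Sum>j<n. X a i * WK (i, c) * WQ (j, c) * X b j)"
    by (rule sum.swap)
  also have "\<dots> = (\<Sum>c<nk. lin n (X a) c WK * lin n (X b) c WQ)"
    unfolding lin_def sum_product by (intro sum.cong refl) (simp add: ac_simps)
  finally show ?thesis unfolding Ymat_def by simp
qed

abbreviation "Ix n nk \<equiv> {..<n} \<times> {..<nk}"

lemma GM_eq: "gauss_matrix n nk = PiM (Ix n nk) (\<lambda>_. std_gauss)"
  unfolding gauss_matrix_def ..

lemma GM_coord_int:
  assumes "i < n" "c < nk"
  shows "integrable (gauss_matrix n nk) (\<lambda>x. x (i, c))"
  using PM_int_pow[of "Ix n nk" "(i,c)" 1] assms unfolding GM_eq by simp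

lemma GM_pow_int:
  assumes "p \<in> Ix n nk"
  shows "integrable (gauss_matrix n nk) (\<lambda>x. x p ^ k)"
  using PM_int_pow[of "Ix n nk" p k] assms unfolding GM_eq by simp

lemma GM_lin_int:
  assumes "c < nk"
  shows "integrable (gauss_matrix n nk) (lin n \<alpha> c)"
  unfolding lin_def using GM_coord_int assms by (intro Bochner_Integration.integrable_sum Bochner_Integration.integrable_mult_right) auto

lemma GM_lin_mean:
  assumes "c < nk"
  shows "integral\<^sup>L (gauss_matrix n nk) (lin n \<alpha> c) = 0"
proof -
  have "integral\<^sup>L (gauss_matrix n nk) (lin n \<alpha> c) = (\<Sum>i<n. \<alpha> i * integral\<^sup>L (gauss_matrix n nk) (\<lambda>x. x (i, c)))"
    unfolding lin_def using GM_coord_int assms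
    by (subst Bochner_Integration.integral_sum) (auto intro!: Bochner_Integration.integrable_mult_right)
  also have "\<dots> = 0" using PM_mean[of "Ix n nk"] assms unfolding GM_eq by simp
  finally show ?thesis .
qed

lemma GM_linlin:
  assumes "c < nk" "e < nk"
  shows "integrable (gauss_matrix n nk) (\<lambda>x. lin n \<alpha> c x * lin n \<beta> e x)"
    and "integral\<^sup>L (gauss_matrix n nk) (\<lambda>x. lin n \<alpha> c x * lin n \<beta> e x) = (if c = e then (\<Sum>i<n. \<alpha> i * \<beta> i) else 0)"
proof -
  have eq: "(\<lambda>x. lin n \<alpha> c x * lin n \<beta> e x) = (\<lambda>x. \<Sum>i<n. \<Sum>k<n. (\<alpha> i * \<beta> k) * (x (i, c) * x (k, e)))"
    unfolding lin_def sum_product by (simp add: ac_simps)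
  have int: "integrable (gauss_matrix n nk) (\<lambda>x. x (i, c) * x (k, e))" if "i < n" "k < n" for i k
    using PM_int_mult[of "Ix n nk" "(i,c)" "(k,e)"] that assms unfolding GM_eq by simp
  show "integrable (gauss_matrix n nk) (\<lambda>x. lin n \<alpha> c x * lin n \<beta> e x)"
    unfolding eq using int by (intro Bochner_Integration.integrable_sum Bochner_Integration.integrable_mult_right) auto
  have "integral\<^sup>L (gauss_matrix n nk) (\<lambda>x. lin n \<alpha> c x * lin n \<beta> e x)
      = (\<Sum>i<n. \<Sum>k<n. (\<alpha> i * \<beta> k) * integral\<^sup>L (gauss_matrix n nk) (\<lambda>x. x (i, c) * x (k, e)))"
    unfolding eq using int
    by (subst Bochner_Integration.integral_sum, fastforce intro!: Bochner_Integration.integrable_sum Bochner_Integration.integrable_mult_right, intro sum.cong refl,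
        subst Bochner_Integration.integral_sum, auto intro!: Bochner_Integration.integrable_mult_right)
  also have "\<dots> = (\<Sum>i<n. \<Sum>k<n. (\<alpha> i * \<beta> k) * (if (i, c) = (k, e) then 1 else 0))"
    using PM_cov[of "Ix n nk"] assms unfolding GM_eq by (intro sum.cong refl) simp
  also have "\<dots> = (if c = e then (\<Sum>i<n. \<alpha> i * \<beta> i) else 0)"
    by (cases "c = e") (simp_all add: if_distrib cong: if_cong)
  finally show "integral\<^sup>L (gauss_matrix n nk) (\<lambda>x. lin n \<alpha> c x * lin n \<beta> e x) = (if c = e then (\<Sum>i<n. \<alpha> i * \<beta> i) else 0)" .
qed

lemma P_prob: "prob_space (WKQ_law n nk)"
proof -
  interpret p1: prob_space "gauss_matrix n nk" by (rule GM_prob)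
  interpret pair_prob_space "gauss_matrix n nk" "gauss_matrix n nk" ..
  show ?thesis unfolding WKQ_law_def by (rule prob_space_axioms)
qed

lemma PP:
  fixes f g :: "_ \<Rightarrow> real"
  assumes "integrable (gauss_matrix n nk) f" "integrable (gauss_matrix n nk) g"
  shows "integrable (WKQ_law n nk) (\<lambda>w. f (fst w) * g (snd w))"
    and "integral\<^sup>L (WKQ_law n nk) (\<lambda>w. f (fst w) * g (snd w)) = integral\<^sup>L (gauss_matrix n nk) f * integral\<^sup>L (gauss_matrix n nk) g"
  unfolding WKQ_law_def using pair_prod[OF GM_prob GM_prob assms] by auto

definition Yf :: "nat \<Rightarrow> nat \<Rightarrow> (nat \<Rightarrow> nat \<Rightarrow> real) \<Rightarrow> (nat \<times> nat \<Rightarrow> real) \<times> (nat \<times> nat \<Rightarrow> real) \<Rightarrow> nat \<Rightarrow> nat \<Rightarrow> real" where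
  "Yf n nk X W a b = Ymat n nk X (fst W) (snd W) a b"

lemma Y_int: "integrable (WKQ_law n nk) (\<lambda>W. Yf n nk X W a b)"
  unfolding Yf_def Y_lin
  by (intro Bochner_Integration.integrable_mult_right Bochner_Integration.integrable_sum PP(1) GM_lin_int) auto

lemma Y_meas[measurable]: "(\<lambda>W. Yf n nk X W a b) \<in> borel_measurable (WKQ_law n nk)"
  using Y_int by (rule borel_measurable_integrable)

lemma Y_mean: "integral\<^sup>L (WKQ_law n nk) (\<lambda>W. Yf n nk X W a b) = 0"
  unfolding Yf_def Y_lin
  by (subst integral_mult_right_zero, subst Bochner_Integration.integral_sum)
     (auto intro!: PP(1) GM_lin_int simp: PP(2) GM_lin_int GM_lin_mean)


lemma Y_cov:
  assumes n: "0 < n"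
  shows "integrable (WKQ_law n nk) (\<lambda>W. Yf n nk X W a b * Yf n nk X W c d)"
    and "integral\<^sup>L (WKQ_law n nk) (\<lambda>W. Yf n nk X W a b * Yf n nk X W c d) = real nk * Vmat n X a c * Vmat n X b d"
proof -
  define F where "F f g W = (lin n (X a) f (fst W) * lin n (X c) g (fst W)) * (lin n (X b) f (snd W) * lin n (X d) g (snd W))" for f g W
  have eq: "(\<lambda>W. Yf n nk X W a b * Yf n nk X W c d) = (\<lambda>W. (1 / real n) * (1 / real n) * (\<Sum>f<nk. \<Sum>g<nk. F f g W))"
    unfolding Yf_def Y_lin F_def by (rule ext) (simp add: sum_product ac_simps)
  have intF: "integrable (WKQ_law n nk) (F f g)" if "f < nk" "g < nk" for f g
    unfolding F_def by (rule PP(1)) (use GM_linlin(1) that in auto)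
  have EF: "integral\<^sup>L (WKQ_law n nk) (F f g) = (if f = g then (\<Sum>i<n. X a i * X c i) * (\<Sum>j<n. X b j * X d j) else 0)"
    if "f < nk" "g < nk" for f g
    unfolding F_def using that by (subst PP(2)) (auto simp: GM_linlin)
  show "integrable (WKQ_law n nk) (\<lambda>W. Yf n nk X W a b * Yf n nk X W c d)"
    unfolding eq using intF by (intro Bochner_Integration.integrable_mult_right Bochner_Integration.integrable_sum) auto
  have "integral\<^sup>L (WKQ_law n nk) (\<lambda>W. Yf n nk X W a b * Yf n nk X W c d)
      = (1 / real n) * (1 / real n) * (\<Sum>f<nk. \<Sum>g<nk. integral\<^sup>L (WKQ_law n nk) (F f g))"
    unfolding eq using intF
    by (subst Bochner_Integration.integral_mult_right_zero, subst Bochner_Integration.integral_sum,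
        fastforce intro!: Bochner_Integration.integrable_sum, intro arg_cong[where f="\<lambda>x. _ * x"] sum.cong refl,
        subst Bochner_Integration.integral_sum, auto)
  also have "\<dots> = (1 / real n) * (1 / real n) * (\<Sum>f<nk. (\<Sum>i<n. X a i * X c i) * (\<Sum>j<n. X b j * X d j))"
  proof -
    have "(\<Sum>f<nk. \<Sum>g<nk. integral\<^sup>L (WKQ_law n nk) (F f g))
       = (\<Sum>f<nk. \<Sum>g<nk. if f = g then (\<Sum>i<n. X a i * X c i) * (\<Sum>j<n. X b j * X d j) else 0)"
      using EF by (intro sum.cong refl) auto
    also have "\<dots> = (\<Sum>f<nk. (\<Sum>i<n. X a i * X c i) * (\<Sum>j<n. X b j * X d j))"
      by (intro sum.cong refl) (simp add: sum.delta)
    finally show ?thesis by simp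
  qed
  also have "\<dots> = real nk * Vmat n X a c * Vmat n X b d"
    unfolding Vmat_def using n by (simp add: field_simps)
  finally show "integral\<^sup>L (WKQ_law n nk) (\<lambda>W. Yf n nk X W a b * Yf n nk X W c d) = real nk * Vmat n X a c * Vmat n X b d" .
qed



definition Sf :: "nat \<Rightarrow> nat \<Rightarrow> (nat \<times> nat \<Rightarrow> real) \<times> (nat \<times> nat \<Rightarrow> real) \<Rightarrow> real" where
  "Sf n nk W = (\<Sum>p\<in>Ix n nk. (fst W p)\<^sup>2 + (snd W p)\<^sup>2)"

definition Xm :: "nat \<Rightarrow> nat \<Rightarrow> (nat \<Rightarrow> nat \<Rightarrow> real) \<Rightarrow> real" where
  "Xm m n X = (\<Sum>a<m. \<Sum>i<n. \<bar>X a i\<bar>)"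

definition Mfun where
  "Mfun m n nk X W = real n * real nk * (Xm m n X)\<^sup>2 * Sf n nk W"

lemma Sf_nonneg: "0 \<le> Sf n nk W"
  unfolding Sf_def by (intro sum_nonneg) auto

lemma Xm_nonneg: "0 \<le> Xm m n X"
  unfolding Xm_def by (intro sum_nonneg) auto

lemma Mfun_nonneg: "0 \<le> Mfun m n nk X W"
  unfolding Mfun_def using Sf_nonneg by simp

lemma X_le: "a < m \<Longrightarrow> i < n \<Longrightarrow> \<bar>X a i\<bar> \<le> Xm m n X"
proof -
  assume a: "a < m" and i: "i < n"
  have "\<bar>X a i\<bar> \<le> (\<Sum>i<n. \<bar>X a i\<bar>)" using i by (intro member_le_sum) auto
  also have "\<dots> \<le> (\<Sum>a<m. \<Sum>i<n. \<bar>X a i\<bar>)" using a by (intro member_le_sum[where f="\<lambda>a. \<Sum>i<n. \<bar>X a i\<bar>"]) (auto intro: sum_nonneg)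
  finally show ?thesis unfolding Xm_def .
qed

lemma fst_sq_le: "p \<in> Ix n nk \<Longrightarrow> (fst W p)\<^sup>2 \<le> Sf n nk W"
proof -
  assume p: "p \<in> Ix n nk"
  have "(fst W p)\<^sup>2 \<le> (fst W p)\<^sup>2 + (snd W p)\<^sup>2" by simp
  also have "\<dots> \<le> Sf n nk W" unfolding Sf_def using p
    by (intro member_le_sum[where f="\<lambda>p. (fst W p)\<^sup>2 + (snd W p)\<^sup>2"]) auto
  finally show ?thesis .
qed

lemma snd_sq_le: "p \<in> Ix n nk \<Longrightarrow> (snd W p)\<^sup>2 \<le> Sf n nk W"
proof -
  assume p: "p \<in> Ix n nk"
  have "(snd W p)\<^sup>2 \<le> (fst W p)\<^sup>2 + (snd W p)\<^sup>2" by simp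
  also have "\<dots> \<le> Sf n nk W" unfolding Sf_def using p
    by (intro member_le_sum[where f="\<lambda>p. (fst W p)\<^sup>2 + (snd W p)\<^sup>2"]) auto
  finally show ?thesis .
qed

lemma abs_prod_le_sq: "\<bar>u * v\<bar> \<le> (u\<^sup>2 + v\<^sup>2) / 2" for u v :: real
proof -
  have "0 \<le> (\<bar>u\<bar> - \<bar>v\<bar>) * (\<bar>u\<bar> - \<bar>v\<bar>)" by simp
  then show ?thesis by (simp add: algebra_simps power2_eq_square abs_mult)
qed

lemma prod_le_S: "p \<in> Ix n nk \<Longrightarrow> q \<in> Ix n nk \<Longrightarrow> \<bar>fst W p * snd W q\<bar> \<le> Sf n nk W"
proof -
  assume p: "p \<in> Ix n nk" and q: "q \<in> Ix n nk"
  have a: "(fst W p)\<^sup>2 \<le> Sf n nk W" by (rule fst_sq_le[OF p])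
  have b: "(snd W q)\<^sup>2 \<le> Sf n nk W" by (rule snd_sq_le[OF q])
  have "\<bar>fst W p * snd W q\<bar> \<le> ((fst W p)\<^sup>2 + (snd W q)\<^sup>2) / 2" by (rule abs_prod_le_sq)
  also have "\<dots> \<le> (Sf n nk W + Sf n nk W) / 2" using a b by (intro divide_right_mono add_mono) auto
  finally show ?thesis by simp
qed

lemma abs_sum_le_card: "(\<And>i. i \<in> A \<Longrightarrow> \<bar>f i\<bar> \<le> K) \<Longrightarrow> \<bar>sum f A\<bar> \<le> of_nat (card A) * (K::real)"
  by (rule order_trans[OF sum_abs sum_bounded_above]) auto

lemma Y_bound:
  assumes "a < m" "b < m" "0 < n"
  shows "\<bar>Yf n nk X W a b\<bar> \<le> Mfun m n nk X W"
proof -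
  have t: "\<bar>X a i * fst W (i, c) * snd W (j, c) * X b j\<bar> \<le> Xm m n X * Sf n nk W * Xm m n X"
    if "i < n" "j < n" "c < nk" for i j c
  proof -
    have "\<bar>X a i * (fst W (i, c) * snd W (j, c)) * X b j\<bar> \<le> Xm m n X * Sf n nk W * Xm m n X"
      using that assms by (intro abs_mult_le X_le prod_le_S) auto
    then show ?thesis by (simp add: mult.assoc)
  qed
  have "\<bar>\<Sum>i<n. \<Sum>j<n. \<Sum>c<nk. X a i * fst W (i, c) * snd W (j, c) * X b j\<bar>
      \<le> real n * (real n * (real nk * (Xm m n X * Sf n nk W * Xm m n X)))"
  proof -
    have "\<bar>\<Sum>c<nk. X a i * fst W (i, c) * snd W (j, c) * X b j\<bar> \<le> real nk * (Xm m n X * Sf n nk W * Xm m n X)"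
      if "i < n" "j < n" for i j
      using abs_sum_le_card[of "{..<nk}" "\<lambda>c. X a i * fst W (i, c) * snd W (j, c) * X b j"] t that by simp
    then have "\<bar>\<Sum>j<n. \<Sum>c<nk. X a i * fst W (i, c) * snd W (j, c) * X b j\<bar> \<le> real n * (real nk * (Xm m n X * Sf n nk W * Xm m n X))"
      if "i < n" for i
      using abs_sum_le_card[of "{..<n}" "\<lambda>j. \<Sum>c<nk. X a i * fst W (i, c) * snd W (j, c) * X b j"] that by simp
    then show ?thesis
      using abs_sum_le_card[of "{..<n}" "\<lambda>i. \<Sum>j<n. \<Sum>c<nk. X a i * fst W (i, c) * snd W (j, c) * X b j"] by simp
  qed
  then have "\<bar>Yf n nk X W a b\<bar> \<le> (1 / real n) * (real n * (real n * (real nk * (Xm m n X * Sf n nk W * Xm m n X))))"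
  proof -
    have e: "\<bar>1 / real n\<bar> = 1 / real n" by simp
    show ?thesis unfolding Yf_def Ymat_def abs_mult e using assms \<open>\<bar>\<Sum>i<n. _\<bar> \<le> _\<close> by (intro mult_left_mono) auto
  qed
  also have "\<dots> = Mfun m n nk X W" unfolding Mfun_def using assms by (simp add: power2_eq_square)
  finally show ?thesis .
qed

lemma P_fst_int: "integrable (gauss_matrix n nk) (f :: _ \<Rightarrow> real) \<Longrightarrow> integrable (WKQ_law n nk) (\<lambda>W. f (fst W))"
proof -
  assume f: "integrable (gauss_matrix n nk) f"
  interpret prob_space "gauss_matrix n nk" by (rule GM_prob)
  have "integrable (WKQ_law n nk) (\<lambda>W. f (fst W) * (\<lambda>_. 1) (snd W))" by (rule PP(1)[OF f]) simp
  then show ?thesis by simp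
qed

lemma P_snd_int: "integrable (gauss_matrix n nk) (f :: _ \<Rightarrow> real) \<Longrightarrow> integrable (WKQ_law n nk) (\<lambda>W. f (snd W))"
proof -
  assume f: "integrable (gauss_matrix n nk) f"
  interpret prob_space "gauss_matrix n nk" by (rule GM_prob)
  have "integrable (WKQ_law n nk) (\<lambda>W. (\<lambda>_. 1) (fst W) * f (snd W))" by (rule PP(1)[OF _ f]) simp
  then show ?thesis by simp
qed

lemma S_int: "integrable (WKQ_law n nk) (Sf n nk)"
  unfolding Sf_def
  by (intro Bochner_Integration.integrable_sum Bochner_Integration.integrable_add P_fst_int[of n nk "\<lambda>x. x _ ^ 2"]
      P_snd_int[of n nk "\<lambda>x. x _ ^ 2"] GM_pow_int)

lemma S_meas[measurable]: "Sf n nk \<in> borel_measurable (WKQ_law n nk)"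
  using S_int by (rule borel_measurable_integrable)

lemma sq_sum2: "(u + v)\<^sup>2 \<le> 2 * (u\<^sup>2 + v\<^sup>2)" for u v :: real
proof -
  have "0 \<le> (u - v) * (u - v)" by simp
  then show ?thesis by (simp add: algebra_simps power2_eq_square)
qed

lemma S4_bound:
  "(Sf n nk W) ^ 4 \<le> real (card (Ix n nk)) ^ 3 * (8 * (\<Sum>p\<in>Ix n nk. (fst W p) ^ 8 + (snd W p) ^ 8))"
proof -
  define T where "T p = (fst W p)\<^sup>2 + (snd W p)\<^sup>2" for p
  define N where "N = real (card (Ix n nk))"
  have N0: "0 \<le> N" unfolding N_def by simp
  have T4: "((T p)\<^sup>2)\<^sup>2 \<le> 8 * ((fst W p) ^ 8 + (snd W p) ^ 8)" for p
  proof -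
    have a: "(T p)\<^sup>2 \<le> 2 * ((fst W p) ^ 4 + (snd W p) ^ 4)"
      using sq_sum2[of "(fst W p)\<^sup>2" "(snd W p)\<^sup>2"] unfolding T_def by (simp add: power_mult[symmetric])
    have "((T p)\<^sup>2)\<^sup>2 \<le> (2 * ((fst W p) ^ 4 + (snd W p) ^ 4))\<^sup>2"
      using a by (intro power_mono) auto
    also have "\<dots> = 4 * ((fst W p) ^ 4 + (snd W p) ^ 4)\<^sup>2" by (simp add: power2_eq_square algebra_simps)
    also have "\<dots> \<le> 4 * (2 * (((fst W p) ^ 4)\<^sup>2 + ((snd W p) ^ 4)\<^sup>2))" using sq_sum2[of "(fst W p) ^ 4" "(snd W p) ^ 4"] by (intro mult_left_mono) auto
    also have "\<dots> = 8 * ((fst W p) ^ 8 + (snd W p) ^ 8)" by (simp add: power_mult[symmetric])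
    finally show ?thesis .
  qed
  have S: "Sf n nk W = (\<Sum>p\<in>Ix n nk. T p)" unfolding Sf_def T_def ..
  have "(Sf n nk W)\<^sup>2 \<le> (\<Sum>p\<in>Ix n nk. (T p)\<^sup>2) * N"
    unfolding S N_def by (rule sum_squared_le_sum_of_squares)
  then have "((Sf n nk W)\<^sup>2)\<^sup>2 \<le> ((\<Sum>p\<in>Ix n nk. (T p)\<^sup>2) * N)\<^sup>2"
    by (intro power_mono) auto
  also have "\<dots> = (\<Sum>p\<in>Ix n nk. (T p)\<^sup>2)\<^sup>2 * N\<^sup>2" by (simp add: power_mult_distrib)
  also have "\<dots> \<le> ((\<Sum>p\<in>Ix n nk. ((T p)\<^sup>2)\<^sup>2) * N) * N\<^sup>2"
    unfolding N_def by (intro mult_right_mono sum_squared_le_sum_of_squares) auto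
  also have "\<dots> \<le> ((\<Sum>p\<in>Ix n nk. 8 * ((fst W p) ^ 8 + (snd W p) ^ 8)) * N) * N\<^sup>2"
    using N0 T4 by (intro mult_right_mono sum_mono) auto
  also have "\<dots> = N ^ 3 * (8 * (\<Sum>p\<in>Ix n nk. (fst W p) ^ 8 + (snd W p) ^ 8))"
    by (simp only: sum_distrib_left[symmetric]) (simp add: power2_eq_square power3_eq_cube ac_simps)
  finally show ?thesis unfolding N_def by (simp add: power_mult[symmetric])
qed

lemma ev8: "0 \<le> (x::real) ^ 8"
proof -
  have "x ^ 8 = (x ^ 4)\<^sup>2" by (simp add: power_mult[symmetric])
  then show ?thesis by simp
qed

lemma S4_int: "integrable (WKQ_law n nk) (\<lambda>W. (Sf n nk W) ^ 4)"
proof (rule Bochner_Integration.integrable_bound)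
  show "integrable (WKQ_law n nk) (\<lambda>W. real (card (Ix n nk)) ^ 3 * (8 * (\<Sum>p\<in>Ix n nk. (fst W p) ^ 8 + (snd W p) ^ 8)))"
    by (intro Bochner_Integration.integrable_mult_right Bochner_Integration.integrable_sum
        Bochner_Integration.integrable_add P_fst_int[of n nk "\<lambda>x. x _ ^ 8"]
      P_snd_int[of n nk "\<lambda>x. x _ ^ 8"] GM_pow_int)
  show "(\<lambda>W. (Sf n nk W) ^ 4) \<in> borel_measurable (WKQ_law n nk)" by measurable
  show "AE W in WKQ_law n nk. norm ((Sf n nk W) ^ 4) \<le> norm (real (card (Ix n nk)) ^ 3 * (8 * (\<Sum>p\<in>Ix n nk. (fst W p) ^ 8 + (snd W p) ^ 8)))"
  proof (intro AE_I2)
    fix W :: "(nat \<times> nat \<Rightarrow> real) \<times> (nat \<times> nat \<Rightarrow> real)"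
    have "0 \<le> (\<Sum>p\<in>Ix n nk. (fst W p) ^ 8 + (snd W p) ^ 8)"
      by (intro sum_nonneg add_nonneg_nonneg ev8)
    then show "norm ((Sf n nk W) ^ 4) \<le> norm (real (card (Ix n nk)) ^ 3 * (8 * (\<Sum>p\<in>Ix n nk. (fst W p) ^ 8 + (snd W p) ^ 8)))"
      using S4_bound[of n nk W] Sf_nonneg[of n nk W] by simp
  qed
qed

lemma pow_le_1_S4: "0 \<le> s \<Longrightarrow> k \<le> 4 \<Longrightarrow> s ^ k \<le> 1 + s ^ 4" for s :: real
proof (cases "s \<le> 1")
  case True
  assume "0 \<le> s"
  then have "s ^ k \<le> 1" using True by (simp add: power_le_one)
  then show ?thesis using zero_le_power[OF \<open>0 \<le> s\<close>, of 4] by linarith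
next
  case False
  assume "k \<le> 4"
  then have "s ^ k \<le> s ^ 4" using False by (intro power_increasing) auto
  then show ?thesis by simp
qed

lemma M_int:
  assumes "k \<le> 4"
  shows "integrable (WKQ_law n nk) (\<lambda>W. (Mfun m n nk X W) ^ k)"
proof -
  interpret prob_space "WKQ_law n nk" by (rule P_prob)
  have "integrable (WKQ_law n nk) (\<lambda>W. (Sf n nk W) ^ k)"
  proof (rule Bochner_Integration.integrable_bound)
    show "integrable (WKQ_law n nk) (\<lambda>W. 1 + (Sf n nk W) ^ 4)"
      using S4_int by (intro Bochner_Integration.integrable_add) auto
    show "(\<lambda>W. (Sf n nk W) ^ k) \<in> borel_measurable (WKQ_law n nk)" by measurable
    show "AE W in WKQ_law n nk. norm ((Sf n nk W) ^ k) \<le> norm (1 + (Sf n nk W) ^ 4)"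
      using pow_le_1_S4[OF Sf_nonneg assms] Sf_nonneg by (intro AE_I2) auto
  qed
  then have "integrable (WKQ_law n nk) (\<lambda>W. (real n * real nk * (Xm m n X)\<^sup>2) ^ k * (Sf n nk W) ^ k)"
    by (rule Bochner_Integration.integrable_mult_right)
  then show ?thesis unfolding Mfun_def by (simp add: power_mult_distrib)
qed



definition Lf where
  "Lf m n nk X W a b = (Yf n nk X W a b - (\<Sum>c<m. Yf n nk X W a c) / real m) / real m"

lemma L_int: "integrable (WKQ_law n nk) (\<lambda>W. Lf m n nk X W a b)"
  unfolding Lf_def
  by (intro Bochner_Integration.integrable_divide Bochner_Integration.integrable_diff
      Bochner_Integration.integrable_sum Y_int)

lemma L_meas[measurable]: "(\<lambda>W. Lf m n nk X W a b) \<in> borel_measurable (WKQ_law n nk)"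
  using L_int by (rule borel_measurable_integrable)

lemma L_mean: "integral\<^sup>L (WKQ_law n nk) (\<lambda>W. Lf m n nk X W a b) = 0"
  unfolding Lf_def
  by (simp add: Bochner_Integration.integral_diff Bochner_Integration.integrable_sum Y_int Y_mean
      Bochner_Integration.integral_sum)

lemma Vmat_sym: "Vmat n X a b = Vmat n X b a"
  unfolding Vmat_def by (simp add: mult.commute)

lemma L_cov:
  assumes n: "0 < n" and m: "0 < m"
  shows "integral\<^sup>L (WKQ_law n nk) (\<lambda>W. Lf m n nk X W a b * Lf m n nk X W c d)
       = real nk / (real m)\<^sup>2 * S1 m n X a b c d"
proof -
  let ?Y = "Yf n nk X"
  let ?P = "WKQ_law n nk"
  have eq: "Lf m n nk X W a b * Lf m n nk X W c d =
     (1 / (real m)\<^sup>2) * (?Y W a b * ?Y W c d - (1 / real m) * (\<Sum>g<m. ?Y W a b * ?Y W c g)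
       - (1 / real m) * (\<Sum>f<m. ?Y W a f * ?Y W c d) + (1 / (real m)\<^sup>2) * (\<Sum>f<m. \<Sum>g<m. ?Y W a f * ?Y W c g))" for W
  proof -
    have "Lf m n nk X W a b * Lf m n nk X W c d =
      (1 / (real m)\<^sup>2) * ((?Y W a b - (1 / real m) * (\<Sum>f<m. ?Y W a f)) * (?Y W c d - (1 / real m) * (\<Sum>g<m. ?Y W c g)))"
      unfolding Lf_def by (simp add: power2_eq_square)
    also have "\<dots> = (1 / (real m)\<^sup>2) * (?Y W a b * ?Y W c d - (1 / real m) * (?Y W a b * (\<Sum>g<m. ?Y W c g))
       - (1 / real m) * ((\<Sum>f<m. ?Y W a f) * ?Y W c d) + (1 / (real m)\<^sup>2) * ((\<Sum>f<m. ?Y W a f) * (\<Sum>g<m. ?Y W c g)))"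
      by (simp add: algebra_simps power2_eq_square)
    also have "\<dots> = (1 / (real m)\<^sup>2) * (?Y W a b * ?Y W c d - (1 / real m) * (\<Sum>g<m. ?Y W a b * ?Y W c g)
       - (1 / real m) * (\<Sum>f<m. ?Y W a f * ?Y W c d) + (1 / (real m)\<^sup>2) * (\<Sum>f<m. \<Sum>g<m. ?Y W a f * ?Y W c g))"
    proof -
      have h1: "?Y W a b * (\<Sum>g<m. ?Y W c g) = (\<Sum>g<m. ?Y W a b * ?Y W c g)" by (rule sum_distrib_left)
      have h2: "(\<Sum>f<m. ?Y W a f) * ?Y W c d = (\<Sum>f<m. ?Y W a f * ?Y W c d)" by (rule sum_distrib_right)
      have h3: "(\<Sum>f<m. ?Y W a f) * (\<Sum>g<m. ?Y W c g) = (\<Sum>f<m. \<Sum>g<m. ?Y W a f * ?Y W c g)" by (rule sum_product)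
      show ?thesis by (simp only: h1 h2 h3)
    qed
    finally show ?thesis .
  qed
  have iYY: "integrable ?P (\<lambda>W. ?Y W p q * ?Y W r s)" for p q r s using Y_cov(1)[OF n] .
  have EYY: "integral\<^sup>L ?P (\<lambda>W. ?Y W p q * ?Y W r s) = real nk * Vmat n X p r * Vmat n X q s" for p q r s
    using Y_cov(2)[OF n] .
  have "integral\<^sup>L ?P (\<lambda>W. Lf m n nk X W a b * Lf m n nk X W c d)
     = (1 / (real m)\<^sup>2) * (real nk * Vmat n X a c * Vmat n X b d
        - (1 / real m) * (\<Sum>g<m. real nk * Vmat n X a c * Vmat n X b g)
        - (1 / real m) * (\<Sum>f<m. real nk * Vmat n X a c * Vmat n X f d)
        + (1 / (real m)\<^sup>2) * (\<Sum>f<m. \<Sum>g<m. real nk * Vmat n X a c * Vmat n X f g)) "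
    unfolding eq
    by (simp add: iYY EYY Bochner_Integration.integral_diff Bochner_Integration.integral_add
        Bochner_Integration.integrable_diff Bochner_Integration.integrable_add
        Bochner_Integration.integrable_sum Bochner_Integration.integral_sum
        Bochner_Integration.integrable_mult_right del: Bochner_Integration.integral_mult_right_zero)
  also have "\<dots> = real nk / (real m)\<^sup>2 * S1 m n X a b c d"
  proof -
    have s1: "(\<Sum>f<m. Vmat n X f d) = (\<Sum>f<m. Vmat n X d f)" by (intro sum.cong refl) (rule Vmat_sym)
    show ?thesis
      unfolding S1_def Vbar_def Vbarbar_def
      by (simp add: s1 sum_distrib_left[symmetric] sum_distrib_right[symmetric] field_simps)
  qed
  finally show ?thesis .
qed



lemma Ymat_meas[measurable]: "(\<lambda>W. Ymat n nk X (fst W) (snd W) a b) \<in> borel_measurable (WKQ_law n nk)"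
  using Y_meas unfolding Yf_def .

definition ep where
  "ep m n nk X \<tau> W a b = softmax_row m (\<lambda>p q. Ymat n nk X (fst W) (snd W) p q / \<tau>) a b - 1 / real m"

lemma ep_meas[measurable]: "(\<lambda>W. ep m n nk X \<tau> W a b) \<in> borel_measurable (WKQ_law n nk)"
  unfolding ep_def softmax_row_def by measurable

lemma ep_le1:
  assumes "0 < m" "b < m"
  shows "\<bar>ep m n nk X \<tau> W a b\<bar> \<le> 1"
proof -
  let ?x = "\<lambda>c. Ymat n nk X (fst W) (snd W) a c / \<tau>"
  have Dpos: "0 < (\<Sum>c<m. exp (?x c))" using assms by (intro sum_pos) auto
  have "exp (?x b) \<le> (\<Sum>c<m. exp (?x c))" using assms by (intro member_le_sum) auto
  then have s: "0 \<le> exp (?x b) / (\<Sum>c<m. exp (?x c))" "exp (?x b) / (\<Sum>c<m. exp (?x c)) \<le> 1"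
    using Dpos by auto
  have "0 < 1 / real m" "1 / real m \<le> 1" using assms by auto
  then show ?thesis using s unfolding ep_def softmax_row_def abs_le_iff by linarith
qed

lemma L_le:
  assumes "0 < m" "0 < n" "a < m" "b < m"
  shows "\<bar>Lf m n nk X W a b\<bar> \<le> 2 * Mfun m n nk X W"
proof -
  have yb: "\<bar>Yf n nk X W a c\<bar> \<le> Mfun m n nk X W" if "c < m" for c
    using Y_bound assms that by auto
  have "\<bar>\<Sum>c<m. Yf n nk X W a c\<bar> \<le> real m * Mfun m n nk X W"
    using abs_sum_le_card[of "{..<m}" "\<lambda>c. Yf n nk X W a c"] yb by simp
  then have s: "\<bar>(\<Sum>c<m. Yf n nk X W a c) / real m\<bar> \<le> Mfun m n nk X W"
    using assms by (simp add: abs_divide divide_le_eq mult.commute)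
  have "\<bar>Yf n nk X W a b - (\<Sum>c<m. Yf n nk X W a c) / real m\<bar> \<le> 2 * Mfun m n nk X W"
    using yb[OF assms(4)] s by linarith
  moreover have "real m \<ge> 1" using assms by simp
  moreover have "\<bar>Yf n nk X W a b - (\<Sum>c<m. Yf n nk X W a c) / real m\<bar> / real m
      \<le> \<bar>Yf n nk X W a b - (\<Sum>c<m. Yf n nk X W a c) / real m\<bar> / 1"
    using \<open>real m \<ge> 1\<close> by (intro divide_left_mono) auto
  ultimately show ?thesis unfolding Lf_def abs_divide by simp
qed

lemma ep_taylor:
  assumes m: "0 < m" and n: "0 < n" and a: "a < m" and b: "b < m" and tau: "0 < \<tau>"
  shows "\<bar>ep m n nk X \<tau> W a b - (1 / \<tau>) * Lf m n nk X W a b\<bar> \<le> 18 * (1 / \<tau>)\<^sup>2 * (Mfun m n nk X W)\<^sup>2"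
proof -
  define x where "x c = Yf n nk X W a c / \<tau>" for c
  have xb: "\<bar>x c\<bar> \<le> Mfun m n nk X W / \<tau>" if "c < m" for c
    unfolding x_def abs_divide using Y_bound[OF a that n] tau by (simp add: divide_right_mono)
  have st: "\<bar>exp (x b) / (\<Sum>c<m. exp (x c)) - 1 / real m - (x b - (\<Sum>c<m. x c) / real m) / real m\<bar>
      \<le> 18 * (Mfun m n nk X W / \<tau>)\<^sup>2"
    by (rule softmax_taylor[OF m b xb])
  have e1: "ep m n nk X \<tau> W a b = exp (x b) / (\<Sum>c<m. exp (x c)) - 1 / real m"
    unfolding ep_def softmax_row_def x_def Yf_def ..
  have e2: "(1 / \<tau>) * Lf m n nk X W a b = (x b - (\<Sum>c<m. x c) / real m) / real m"
    unfolding Lf_def x_def using tau by (simp add: sum_divide_distrib[symmetric] field_simps)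
  have e3: "18 * (Mfun m n nk X W / \<tau>)\<^sup>2 = 18 * (1 / \<tau>)\<^sup>2 * (Mfun m n nk X W)\<^sup>2"
    by (simp add: power_divide)
  show ?thesis unfolding e1 e2 using st e3 by simp
qed



theorem lemmaC5:
  fixes m n nk :: nat and X :: "nat \<Rightarrow> nat \<Rightarrow> real"
    and \<alpha> \<alpha>' \<beta> \<beta>' \<delta> \<delta>' \<omega> \<omega>' :: nat
  assumes "0 < m" and "0 < n"
    and "\<alpha> < m" "\<alpha>' < m" "\<beta> < m" "\<beta>' < m"
    and "\<delta> < m" "\<delta>' < m" "\<omega> < m" "\<omega>' < m"
  defines "E \<equiv> \<lambda>f. integral\<^sup>L (WKQ_law n nk) f"
    and "A \<equiv> \<lambda>\<tau> (W :: (nat \<times> nat \<Rightarrow> real) \<times> (nat \<times> nat \<Rightarrow> real)) a b.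
                Amat m n nk X \<tau> (fst W) (snd W) a b"
  shows "(\<lambda>\<tau>. E (\<lambda>W. A \<tau> W \<alpha> \<alpha>' * A \<tau> W \<beta> \<beta>' * A \<tau> W \<delta> \<delta>' * A \<tau> W \<omega> \<omega>')
             - E (\<lambda>W. A \<tau> W \<alpha> \<alpha>' * A \<tau> W \<beta> \<beta>') * E (\<lambda>W. A \<tau> W \<delta> \<delta>' * A \<tau> W \<omega> \<omega>')
             - real nk / (\<tau>\<^sup>2 * real m ^ 2) *
                 (kdelta \<alpha> \<alpha>' * kdelta \<delta> \<delta>' * S1 m n X \<beta> \<beta>' \<omega> \<omega>'
                + kdelta \<alpha> \<alpha>' * kdelta \<omega> \<omega>' * S1 m n X \<beta> \<beta>' \<delta> \<delta>'
                + kdelta \<beta> \<beta>' * kdelta \<delta> \<delta>' * S1 m n X \<alpha> \<alpha>' \<omega> \<omega>'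
                + kdelta \<beta> \<beta>' * kdelta \<omega> \<omega>' * S1 m n X \<alpha> \<alpha>' \<delta> \<delta>'))
         \<in> O[at_top](\<lambda>\<tau>. real nk / \<tau> ^ 3)"
proof -
  note m = assms(1) and n = assms(2)
  define pa where "pa k = (if k = 1 then \<alpha> else if k = 2 then \<beta> else if k = 3 then \<delta> else \<omega>)" for k :: nat
  define pb where "pb k = (if k = 1 then \<alpha>' else if k = 2 then \<beta>' else if k = 3 then \<delta>' else \<omega>')" for k :: nat
  have pam: "pa k < m" for k unfolding pa_def using assms by auto
  have pbm: "pb k < m" for k unfolding pb_def using assms by auto
  define P where "P = WKQ_law n nk"
  define e where "e \<tau> k W = ep m n nk X \<tau> W (pa k) (pb k)" for \<tau> k W
  define L where "L k W = Lf m n nk X W (pa k) (pb k)" for k W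
  define d where "d k = kdelta (pa k) (pb k)" for k
  define Mf where "Mf = Mfun m n nk X"
  define h2 where "h2 = integral\<^sup>L P (\<lambda>x. Mf x ^ 2)"
  define h3 where "h3 = integral\<^sup>L P (\<lambda>x. Mf x ^ 3)"
  have h2p: "0 \<le> h2" unfolding h2_def Mf_def by (intro integral_nonneg_AE) (simp add: Mfun_nonneg)
  have h3p: "0 \<le> h3" unfolding h3_def Mf_def by (intro integral_nonneg_AE) (simp add: Mfun_nonneg)
  define C where "C = 200000 * (h3 + h2\<^sup>2)"
  have C0: "0 \<le> C" unfolding C_def using h2p h3p by simp
  have Ae: "A \<tau> W (pa k) (pb k) = d k + e \<tau> k W" for \<tau> W k
    unfolding A_def Amat_def d_def e_def ep_def kdelta_def by simp
  have ELL: "integral\<^sup>L P (\<lambda>x. L i x * L j x) = real nk / (real m)\<^sup>2 * S1 m n X (pa i) (pb i) (pa j) (pb j)" for i j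
    unfolding P_def L_def by (rule L_cov[OF n m])
  have key: "\<bar>E (\<lambda>W. A \<tau> W \<alpha> \<alpha>' * A \<tau> W \<beta> \<beta>' * A \<tau> W \<delta> \<delta>' * A \<tau> W \<omega> \<omega>')
             - E (\<lambda>W. A \<tau> W \<alpha> \<alpha>' * A \<tau> W \<beta> \<beta>') * E (\<lambda>W. A \<tau> W \<delta> \<delta>' * A \<tau> W \<omega> \<omega>')
             - real nk / (\<tau>\<^sup>2 * real m ^ 2) *
                 (kdelta \<alpha> \<alpha>' * kdelta \<delta> \<delta>' * S1 m n X \<beta> \<beta>' \<omega> \<omega>'
                + kdelta \<alpha> \<alpha>' * kdelta \<omega> \<omega>' * S1 m n X \<beta> \<beta>' \<delta> \<delta>'
                + kdelta \<beta> \<beta>' * kdelta \<delta> \<delta>' * S1 m n X \<alpha> \<alpha>' \<omega> \<omega>'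
                + kdelta \<beta> \<beta>' * kdelta \<omega> \<omega>' * S1 m n X \<alpha> \<alpha>' \<delta> \<delta>')\<bar>
        \<le> C * (1 / \<tau>) ^ 3" if tau: "1 \<le> \<tau>" for \<tau>
  proof -
    have tau0: "0 < \<tau>" using tau by simp
    have cb: "\<bar>integral\<^sup>L P (\<lambda>x. (d 1 + e \<tau> 1 x) * (d 2 + e \<tau> 2 x) * (d 3 + e \<tau> 3 x) * (d 4 + e \<tau> 4 x))
        - integral\<^sup>L P (\<lambda>x. (d 1 + e \<tau> 1 x) * (d 2 + e \<tau> 2 x)) * integral\<^sup>L P (\<lambda>x. (d 3 + e \<tau> 3 x) * (d 4 + e \<tau> 4 x))
        - (1 / \<tau>)\<^sup>2 * (d 1 * d 3 * integral\<^sup>L P (\<lambda>x. L 2 x * L 4 x) + d 1 * d 4 * integral\<^sup>L P (\<lambda>x. L 2 x * L 3 x)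
                + d 2 * d 3 * integral\<^sup>L P (\<lambda>x. L 1 x * L 4 x) + d 2 * d 4 * integral\<^sup>L P (\<lambda>x. L 1 x * L 3 x))\<bar>
      \<le> 200000 * (1 / \<tau>) ^ 3 * (integral\<^sup>L P (\<lambda>x. Mf x ^ 3) + (integral\<^sup>L P (\<lambda>x. Mf x ^ 2))\<^sup>2)"
    proof (rule cov_bound)
      show "prob_space P" unfolding P_def by (rule P_prob)
      show "0 < 1 / \<tau>" "1 / \<tau> \<le> 1" using tau by auto
      show "e \<tau> k \<in> borel_measurable P" for k unfolding P_def e_def by measurable
      show "L k \<in> borel_measurable P" for k unfolding P_def L_def by measurable
      show "\<bar>e \<tau> k x\<bar> \<le> 1" for k x unfolding e_def by (rule ep_le1[OF m pbm])
      show "\<bar>e \<tau> k x - 1 / \<tau> * L k x\<bar> \<le> 18 * (1 / \<tau>)\<^sup>2 * (Mf x)\<^sup>2" for k x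
        unfolding e_def L_def Mf_def by (rule ep_taylor[OF m n pam pbm tau0])
      show "\<bar>L k x\<bar> \<le> 2 * Mf x" for k x unfolding L_def Mf_def by (rule L_le[OF m n pam pbm])
      show "0 \<le> Mf x" for x unfolding Mf_def by (rule Mfun_nonneg)
      show "integrable P (\<lambda>x. Mf x ^ 2)" unfolding P_def Mf_def by (rule M_int) simp
      show "integrable P (\<lambda>x. Mf x ^ 3)" unfolding P_def Mf_def by (rule M_int) simp
      show "integral\<^sup>L P (L k) = 0" for k unfolding P_def L_def by (rule L_mean)
      show "\<bar>d k\<bar> \<le> 1" for k unfolding d_def kdelta_def by simp
    qed
    have pa1: "pa 1 = \<alpha>" "pb 1 = \<alpha>'" "pa 2 = \<beta>" "pb 2 = \<beta>'" "pa 3 = \<delta>" "pb 3 = \<delta>'" "pa 4 = \<omega>" "pb 4 = \<omega>'"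
      unfolding pa_def pb_def by simp_all
    have A1: "A \<tau> W \<alpha> \<alpha>' = d 1 + e \<tau> 1 W" for W using Ae[of \<tau> W 1] pa1 by simp
    have A2: "A \<tau> W \<beta> \<beta>' = d 2 + e \<tau> 2 W" for W using Ae[of \<tau> W 2] pa1 by simp
    have A3: "A \<tau> W \<delta> \<delta>' = d 3 + e \<tau> 3 W" for W using Ae[of \<tau> W 3] pa1 by simp
    have A4: "A \<tau> W \<omega> \<omega>' = d 4 + e \<tau> 4 W" for W using Ae[of \<tau> W 4] pa1 by simp
    have main: "(1 / \<tau>)\<^sup>2 * (d 1 * d 3 * integral\<^sup>L P (\<lambda>x. L 2 x * L 4 x) + d 1 * d 4 * integral\<^sup>L P (\<lambda>x. L 2 x * L 3 x)
                + d 2 * d 3 * integral\<^sup>L P (\<lambda>x. L 1 x * L 4 x) + d 2 * d 4 * integral\<^sup>L P (\<lambda>x. L 1 x * L 3 x))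
        = real nk / (\<tau>\<^sup>2 * real m ^ 2) *
                 (kdelta \<alpha> \<alpha>' * kdelta \<delta> \<delta>' * S1 m n X \<beta> \<beta>' \<omega> \<omega>'
                + kdelta \<alpha> \<alpha>' * kdelta \<omega> \<omega>' * S1 m n X \<beta> \<beta>' \<delta> \<delta>'
                + kdelta \<beta> \<beta>' * kdelta \<delta> \<delta>' * S1 m n X \<alpha> \<alpha>' \<omega> \<omega>'
                + kdelta \<beta> \<beta>' * kdelta \<omega> \<omega>' * S1 m n X \<alpha> \<alpha>' \<delta> \<delta>')"
    proof -
      have m0: "real m \<noteq> 0" using m by simp
      show ?thesis unfolding ELL d_def pa1 using m0 by (simp add: field_simps power2_eq_square)
    qed
    have "200000 * (1 / \<tau>) ^ 3 * (integral\<^sup>L P (\<lambda>x. Mf x ^ 3) + (integral\<^sup>L P (\<lambda>x. Mf x ^ 2))\<^sup>2) = C * (1 / \<tau>) ^ 3"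
      unfolding C_def h2_def h3_def by simp
    with cb show ?thesis
      unfolding E_def A1 A2 A3 A4 P_def[symmetric] main[symmetric] by simp
  qed
  have h0: "C = 0" if "nk = 0"
    unfolding C_def h2_def h3_def Mf_def Mfun_def using that by simp
  show ?thesis
  proof (rule bigoI[where c = C])
    show "eventually (\<lambda>\<tau>. norm (E (\<lambda>W. A \<tau> W \<alpha> \<alpha>' * A \<tau> W \<beta> \<beta>' * A \<tau> W \<delta> \<delta>' * A \<tau> W \<omega> \<omega>')
             - E (\<lambda>W. A \<tau> W \<alpha> \<alpha>' * A \<tau> W \<beta> \<beta>') * E (\<lambda>W. A \<tau> W \<delta> \<delta>' * A \<tau> W \<omega> \<omega>')
             - real nk / (\<tau>\<^sup>2 * real m ^ 2) *
                 (kdelta \<alpha> \<alpha>' * kdelta \<delta> \<delta>' * S1 m n X \<beta> \<beta>' \<omega> \<omega>'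
                + kdelta \<alpha> \<alpha>' * kdelta \<omega> \<omega>' * S1 m n X \<beta> \<beta>' \<delta> \<delta>'
                + kdelta \<beta> \<beta>' * kdelta \<delta> \<delta>' * S1 m n X \<alpha> \<alpha>' \<omega> \<omega>'
                + kdelta \<beta> \<beta>' * kdelta \<omega> \<omega>' * S1 m n X \<alpha> \<alpha>' \<delta> \<delta>')) \<le> C * norm (real nk / \<tau> ^ 3)) at_top"
      using eventually_ge_at_top[of "1::real"]
    proof eventually_elim
      case (elim \<tau>)
      have "C * (1 / \<tau>) ^ 3 \<le> C * norm (real nk / \<tau> ^ 3)"
      proof (cases "nk = 0")
        case True
        then show ?thesis using h0 by simp
      next
        case False
        then have "1 * (1 / \<tau>) ^ 3 \<le> real nk * (1 / \<tau>) ^ 3" using elim by (intro mult_right_mono) auto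
        then have "(1 / \<tau>) ^ 3 \<le> real nk * (1 / \<tau>) ^ 3" by simp
        also have "\<dots> = norm (real nk / \<tau> ^ 3)" using elim by (simp add: power_divide)
        finally show ?thesis using C0 by (intro mult_left_mono) auto
      qed
      then show ?case using key[OF elim] by simp
    qed
  qed
qed


end
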